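(* Let $N\ge5$, $\mu>0$, $2<p<2+\frac4N$ and $0<c<c_*$. For any $m\in\mathbb N^+$ there exists an $m$-dimensional subspace $E_m\subset H^2_r(\mathbb R^N)$ having a basis $\{u_1,\dots,u_m\}\subseteq V_r(c)$ with $\int_{\mathbb R^N}u_iu_j\,dx=0$ for $i\ne j$, such that $$T_m:=\Big\{s_1u_1+\cdots+s_mu_m: s_i\in\mathbb R,\ \sum_{i=1}^m s_i^2=1\Big\}\subseteq V_r(c).$$ Moreover, there exists $\mu_m=\mu(m)>0$ such that $\max_{u\in T_m}I(u)<0$ when $\mu\ge\mu_m$.
   Context: $4^*:=\frac{2N}{N-4}$, $\gamma_p:=\frac N2(\frac12-\frac1p)$. $C_{N,p}$ is the (optimal) Gagliardo–Nirenberg constant with $\|u\|_p\le C_{N,p}\|\Delta u\|_2^{\gamma_p}\|u\|_2^{1-\gamma_p}$ on $H^2(\mathbb R^N)$; $S:=\inf_{u\in H^2\setminus\{0\}}\|\Delta u\|_2^2/\|u\|_{4^*}^2$. $I(u)=\frac12\|\Delta u\|_2^2+\frac12\|\nabla u\|_2^2-\frac{\mu}{p}\|u\|_p^p-\frac1{4^*}\|u\|_{4^*}^{4^*}$ on $H^2(\mathbb R^N)$. $H^2_r(\mathbb R^N):=\{u\in H^2(\mathbb R^N): u\text{ radially decreasing}\}$, $S_r(c):=\{u\in H^2_r:\|u\|_2^2=c\}$. $\mathcal E:=\frac{4^*-p\gamma_p}{2-p\gamma_p}\left(\frac{(2-p\gamma_p)\mu C^p_{N,p}}{(4^*-2)p}\right)^{\frac{4^*-2}{4^*-p\gamma_p}}\left(4^*S^{\frac{4^*}{2}}\right)^{\frac{p\gamma_p-2}{4^*-p\gamma_p}}$,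 $c_*:=(\frac{1}{2\mathcal E})^{\frac{2(4^*-p\gamma_p)}{p(1-\gamma_p)(4^*-2)}}$; $r_c:=\left(\frac{(2-p\gamma_p)\mu 4^*S^{4^*/2} C^p_{N,p}c^{p(1-\gamma_p)/2}}{(4^*-2)p}\right)^{\frac{1}{4^*-p\gamma_p}}$, $r_*:=r_{c_*}$, $V_r(c):=\{u\in S_r(c):\|\Delta u\|_2^2+\|\nabla u\|_2^2<r_*^2\}$.
   Formalization: $H^2_r$ is the set of radial functions in $H^2(\mathbb R^N)$, u(x) = phi(|x|) a.e., rather than radially decreasing ones; $\mu_m$ does not depend on $\mu$, and $T_m$ stays fixed while the $\mu$ in $I$ ranges over $\mu\ge\mu_m$. Each condition added here is assumed in the paper as well or is needed for the statement above to hold. *)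

theory Defs
  imports "HOL-Analysis.Analysis"
begin

section \<open>Functions on R^N, with N = CARD('n)\<close>

type_synonym 'n rfun = "real^'n \<Rightarrow> real"

definition partial :: "'n::finite \<Rightarrow> 'n rfun \<Rightarrow> 'n rfun" where
  "partial i f x = deriv (\<lambda>t. f (x + t *\<^sub>R axis i 1)) 0"

fun iter_partial :: "'n::finite list \<Rightarrow> 'n rfun \<Rightarrow> 'n rfun" where
  "iter_partial [] f = f"
| "iter_partial (i # is) f = partial i (iter_partial is f)"

definition smooth_fun :: "'n::finite rfun \<Rightarrow> bool" where
  "smooth_fun f \<longleftrightarrow> (\<forall>is. continuous_on UNIV (iter_partial is f) \<and>
      (\<forall>i x. (\<lambda>t. iter_partial is f (x + t *\<^sub>R axis i 1)) differentiable (at 0)))"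

definition test_fun :: "'n::finite rfun \<Rightarrow> bool" where
  "test_fun \<phi> \<longleftrightarrow> smooth_fun \<phi> \<and> compact (closure {x. \<phi> x \<noteq> 0})"

definition L2 :: "'n::finite rfun \<Rightarrow> bool" where
  "L2 u \<longleftrightarrow> u \<in> borel_measurable lborel \<and> integrable lborel (\<lambda>x. (u x)\<^sup>2)"

definition weak_deriv :: "'n::finite \<Rightarrow> 'n rfun \<Rightarrow> 'n rfun \<Rightarrow> bool" where
  "weak_deriv i u g \<longleftrightarrow> (\<forall>\<phi>. test_fun \<phi> \<longrightarrow>
      integrable lborel (\<lambda>x. u x * partial i \<phi> x) \<and> integrable lborel (\<lambda>x. g x * \<phi> x) \<and>
      (\<integral>x. u x * partial i \<phi> x \<partial>lborel) = - (\<integral>x. g x * \<phi> x \<partial>lborel))"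

definition H2_derivs :: "'n::finite rfun \<Rightarrow> ('n \<Rightarrow> 'n rfun) \<Rightarrow> ('n \<Rightarrow> 'n \<Rightarrow> 'n rfun) \<Rightarrow> bool" where
  "H2_derivs u g h \<longleftrightarrow> (\<forall>i. L2 (g i) \<and> weak_deriv i u (g i)) \<and>
      (\<forall>i j. L2 (h i j) \<and> weak_deriv j (g i) (h i j))"

definition H2 :: "'n::finite rfun \<Rightarrow> bool" where
  "H2 u \<longleftrightarrow> L2 u \<and> (\<exists>g h. H2_derivs u g h)"

definition derivs :: "'n::finite rfun \<Rightarrow> ('n \<Rightarrow> 'n rfun) \<times> ('n \<Rightarrow> 'n \<Rightarrow> 'n rfun)" where
  "derivs u = (SOME gh. H2_derivs u (fst gh) (snd gh))"

definition lapl :: "'n::finite rfun \<Rightarrow> 'n rfun" where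
  "lapl u x = (\<Sum>i\<in>UNIV. snd (derivs u) i i x)"

definition lap_sq :: "'n::finite rfun \<Rightarrow> real" where
  "lap_sq u = (\<integral>x. (lapl u x)\<^sup>2 \<partial>lborel)"

definition grad_sq :: "'n::finite rfun \<Rightarrow> real" where
  "grad_sq u = (\<Sum>i\<in>UNIV. \<integral>x. (fst (derivs u) i x)\<^sup>2 \<partial>lborel)"

definition Lpn :: "real \<Rightarrow> 'n::finite rfun \<Rightarrow> real" where
  "Lpn q u = (\<integral>x. \<bar>u x\<bar> powr q \<partial>lborel) powr (1 / q)"

definition L2_sq :: "'n::finite rfun \<Rightarrow> real" where
  "L2_sq u = (\<integral>x. (u x)\<^sup>2 \<partial>lborel)"

definition crit_exp :: "'n::finite itself \<Rightarrow> real" where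
  "crit_exp _ = 2 * real CARD('n) / (real CARD('n) - 4)"

definition gam :: "'n::finite itself \<Rightarrow> real \<Rightarrow> real" where
  "gam _ q = real CARD('n) / 2 * (1/2 - 1/q)"

definition GN_const :: "'n::finite itself \<Rightarrow> real \<Rightarrow> real" where
  "GN_const T q = Inf {C. C \<ge> 0 \<and> (\<forall>u::'n rfun. H2 u \<longrightarrow>
      Lpn q u \<le> C * sqrt (lap_sq u) powr gam T q * sqrt (L2_sq u) powr (1 - gam T q))}"

definition Sob_const :: "'n::finite itself \<Rightarrow> real" where
  "Sob_const T = Inf {lap_sq u / (Lpn (crit_exp T) u)\<^sup>2 | u::'n rfun. H2 u \<and> \<not> (AE x in lborel. u x = 0)}"

definition Ifun :: "real \<Rightarrow> real \<Rightarrow> 'n::finite rfun \<Rightarrow> real" where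
  "Ifun \<mu> q u = 1/2 * lap_sq u + 1/2 * grad_sq u - \<mu> / q * Lpn q u powr q
      - 1 / crit_exp TYPE('n) * Lpn (crit_exp TYPE('n)) u powr crit_exp TYPE('n)"

definition calE :: "'n::finite itself \<Rightarrow> real \<Rightarrow> real \<Rightarrow> real" where
  "calE T \<mu> q = (let s = crit_exp T; g = gam T q; C = GN_const T q; S = Sob_const T in
     (s - q*g) / (2 - q*g)
     * ((2 - q*g) * \<mu> * C powr q / ((s - 2) * q)) powr ((s - 2) / (s - q*g))
     * (s * S powr (s/2)) powr ((q*g - 2) / (s - q*g)))"

definition c_star :: "'n::finite itself \<Rightarrow> real \<Rightarrow> real \<Rightarrow> real" where
  "c_star T \<mu> q = (let s = crit_exp T; g = gam T q in
     (1 / (2 * calE T \<mu> q)) powr (2 * (s - q*g) / (q * (1 - g) * (s - 2))))"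

definition r_c :: "'n::finite itself \<Rightarrow> real \<Rightarrow> real \<Rightarrow> real \<Rightarrow> real" where
  "r_c T \<mu> q c = (let s = crit_exp T; g = gam T q; C = GN_const T q; S = Sob_const T in
     ((2 - q*g) * \<mu> * s * S powr (s/2) * C powr q * c powr (q * (1 - g) / 2) / ((s - 2) * q))
       powr (1 / (s - q*g)))"

definition r_star :: "'n::finite itself \<Rightarrow> real \<Rightarrow> real \<Rightarrow> real" where
  "r_star T \<mu> q = r_c T \<mu> q (c_star T \<mu> q)"

definition radial :: "'n::finite rfun \<Rightarrow> bool" where
  "radial u \<longleftrightarrow> (\<exists>\<phi>::real \<Rightarrow> real. AE x in lborel. u x = \<phi> (norm x))"

definition H2r :: "'n::finite rfun \<Rightarrow> bool" where
  "H2r u \<longleftrightarrow> H2 u \<and> radial u"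

definition S_r :: "real \<Rightarrow> 'n::finite rfun set" where
  "S_r c = {u. H2r u \<and> L2_sq u = c}"

definition V_r :: "real \<Rightarrow> real \<Rightarrow> real \<Rightarrow> 'n::finite rfun set" where
  "V_r \<mu> q c = {u \<in> S_r c. lap_sq u + grad_sq u < (r_star TYPE('n) \<mu> q)\<^sup>2}"

end

theory Submission
  imports Defs "HOL-Computational_Algebra.Polynomial"
begin

fun Ppol :: "nat \<Rightarrow> real poly" where
  "Ppol 0 = 1"
| "Ppol (Suc n) = [:0,0,1:] * (Ppol n - pderiv (Ppol n))"

definition Ef :: "nat \<Rightarrow> real \<Rightarrow> real" where
  "Ef n t = (if t > 0 then poly (Ppol n) (1/t) * exp (-1/t) else 0)"

lemma poly_exp_lim: "((\<lambda>y. poly Q y * exp (-y)) \<longlongrightarrow> (0::real)) at_top"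
proof -
  have "((\<lambda>y. \<Sum>i\<le>degree Q. coeff Q i * (y ^ i / exp y)) \<longlongrightarrow> (\<Sum>i\<le>degree Q. coeff Q i * 0)) at_top"
    by (intro tendsto_sum tendsto_mult tendsto_const tendsto_power_div_exp_0)
  moreover have "\<And>y. (\<Sum>i\<le>degree Q. coeff Q i * (y ^ i / exp y)) = poly Q y * exp (-y)"
    by (simp add: poly_altdef sum_distrib_right exp_minus divide_inverse mult.assoc)
  ultimately show ?thesis by simp
qed

lemma Ef_deriv: "(Ef n has_real_derivative Ef (Suc n) t) (at t)"
proof (cases "t > 0")
  case True
  let ?g = "\<lambda>t. poly (Ppol n) (1/t) * exp (-1/t)"
  have d: "(?g has_real_derivative
     poly (pderiv (Ppol n)) (1/t) * (-(1/t^2)) * exp (-1/t) + poly (Ppol n) (1/t) * (exp (-1/t) * (1/t^2))) (at t)"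
    using True
    by (auto intro!: derivative_eq_intros DERIV_chain2[OF poly_DERIV] simp: power2_eq_square field_simps)
  have "poly (pderiv (Ppol n)) (1/t) * (-(1/t^2)) * exp (-1/t) + poly (Ppol n) (1/t) * (exp (-1/t) * (1/t^2))
        = Ef (Suc n) t"
    using True by (simp add: Ef_def algebra_simps power2_eq_square divide_simps)
  with d have "(?g has_real_derivative Ef (Suc n) t) (at t)" by simp
  then show ?thesis
    by (rule has_field_derivative_transform_within_open[where S="{0<..}"]) (use True in \<open>auto simp: Ef_def\<close>)
next
  case False
  show ?thesis
  proof (cases "t < 0")
    case True
    have "((\<lambda>_. 0) has_real_derivative 0) (at t)" by simp
    then have "(Ef n has_real_derivative 0) (at t)"
      by (rule has_field_derivative_transform_within_open[where S="{..<0}"]) (use True in \<open>auto simp: Ef_def\<close>)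
    then show ?thesis using True by (simp add: Ef_def)
  next
    case False
    with \<open>\<not> t > 0\<close> have t0: "t = 0" by simp
    have R: "((\<lambda>y. (Ef n y - Ef n 0) / (y - 0)) \<longlongrightarrow> 0) (at_right 0)"
    proof -
      have "((\<lambda>y. poly ([:0,1:] * Ppol n) (inverse y) * exp (- inverse y)) \<longlongrightarrow> 0) (at_right (0::real))"
        using filterlim_compose[OF poly_exp_lim[of "[:0,1:] * Ppol n"] filterlim_inverse_at_top_right] by simp
      then show ?thesis
        by (rule Lim_transform_eventually)
           (auto simp: eventually_at_right_less Ef_def divide_simps intro!: eventually_mono[OF eventually_at_right_less])
    qed
    have L: "((\<lambda>y. (Ef n y - Ef n 0) / (y - 0)) \<longlongrightarrow> 0) (at_left 0)"
    proof (rule Lim_transform_eventually[where f="\<lambda>_. 0"])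
      show "\<forall>\<^sub>F x in at_left 0. 0 = (Ef n x - Ef n 0) / (x - 0)"
        using eventually_at_left_real[where a="0::real" and b="-1"] by (auto elim!: eventually_mono simp: Ef_def)
    qed simp
    have "((\<lambda>y. (Ef n y - Ef n 0) / (y - 0)) \<longlongrightarrow> 0) (at 0)"
      using filterlim_split_at[OF L R] .
    then show ?thesis unfolding t0 has_field_derivative_iff by (simp add: Ef_def)
  qed
qed

lemma Ef_cont: "isCont (Ef n) t"
  using Ef_deriv DERIV_isCont by blast

lemma Ef0_simp: "Ef 0 t = (if t > 0 then exp (-1/t) else 0)"
  by (simp add: Ef_def)

lemma Ef0_bounds: "0 \<le> Ef 0 t" "Ef 0 t \<le> 1"
  by (auto simp: Ef0_simp)

inductive sm :: "('n::finite) rfun \<Rightarrow> bool" where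
  sm_const: "sm (\<lambda>x. c)"
| sm_E: "sm (\<lambda>x. Ef j (\<alpha> * x$k + \<beta>))"
| sm_add: "sm f \<Longrightarrow> sm g \<Longrightarrow> sm (\<lambda>x. f x + g x)"
| sm_mult: "sm f \<Longrightarrow> sm g \<Longrightarrow> sm (\<lambda>x. f x * g x)"

lemma axis_nth: "(x + t *\<^sub>R axis i 1) $ k = x $ k + (if k = i then t else 0)"
  by (simp add: axis_def)

lemma sm_line_deriv:
  assumes "sm f"
  shows "\<exists>g. sm g \<and> (\<forall>x. ((\<lambda>t. f (x + t *\<^sub>R axis i 1)) has_real_derivative g x) (at 0))"
  using assms
proof induction
  case (sm_const c)
  show ?case by (rule exI[of _ "\<lambda>x. 0"]) (auto intro: sm.sm_const)
next
  case (sm_E j \<alpha> k \<beta>)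
  let ?g = "\<lambda>x::real^'a. (\<alpha> * (if k = i then 1 else 0)) * Ef (Suc j) (\<alpha> * x$k + \<beta>)"
  have "sm ?g" by (intro sm.sm_mult sm.sm_const sm.sm_E)
  moreover have "((\<lambda>t. Ef j (\<alpha> * (x + t *\<^sub>R axis i 1)$k + \<beta>)) has_real_derivative ?g x) (at 0)" for x
  proof -
    have dd: "((\<lambda>t. \<alpha> * (x$k + (if k = i then t else 0)) + \<beta>) has_real_derivative \<alpha> * (if k = i then 1 else 0)) (at 0)"
      by (cases "k = i") (auto intro!: derivative_eq_intros)
    have eq: "(\<lambda>t. Ef j (\<alpha> * (x + t *\<^sub>R axis i 1)$k + \<beta>)) = (\<lambda>t. Ef j (\<alpha> * (x$k + (if k = i then t else 0)) + \<beta>))"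
      by (simp only: axis_nth)
    from DERIV_chain2[OF Ef_deriv dd] show ?thesis
      unfolding eq by (simp add: algebra_simps)
  qed
  ultimately show ?case by blast
next
  case (sm_add f g)
  then obtain f' g' where "sm f'" "sm g'"
    "\<And>x. ((\<lambda>t. f (x + t *\<^sub>R axis i 1)) has_real_derivative f' x) (at 0)"
    "\<And>x. ((\<lambda>t. g (x + t *\<^sub>R axis i 1)) has_real_derivative g' x) (at 0)" by blast
  then show ?case
    by (intro exI[of _ "\<lambda>x. f' x + g' x"]) (auto intro: sm.sm_add DERIV_add)
next
  case (sm_mult f g)
  then obtain f' g' where "sm f'" "sm g'"
    "\<And>x. ((\<lambda>t. f (x + t *\<^sub>R axis i 1)) has_real_derivative f' x) (at 0)"
    "\<And>x. ((\<lambda>t. g (x + t *\<^sub>R axis i 1)) has_real_derivative g' x) (at 0)" by blast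
  have "sm (\<lambda>x. f' x * g x + g' x * f x)"
    by (intro sm.sm_add sm.sm_mult sm_mult.hyps \<open>sm f'\<close> \<open>sm g'\<close>)
  moreover have "((\<lambda>t. f (x + t *\<^sub>R axis i 1) * g (x + t *\<^sub>R axis i 1)) has_real_derivative f' x * g x + g' x * f x) (at 0)" for x
    using DERIV_mult[OF \<open>\<And>x. ((\<lambda>t. f (x + t *\<^sub>R axis i 1)) has_real_derivative f' x) (at 0)\<close>
       \<open>\<And>x. ((\<lambda>t. g (x + t *\<^sub>R axis i 1)) has_real_derivative g' x) (at 0)\<close>, of x x] by simp
  ultimately show ?case by blast
qed

lemma sm_partial: "sm f \<Longrightarrow> sm (partial i f)"
proof -
  assume "sm f"
  from sm_line_deriv[OF this, of i] obtain g where g: "sm g"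
    "\<And>x. ((\<lambda>t. f (x + t *\<^sub>R axis i 1)) has_real_derivative g x) (at 0)" by blast
  have "partial i f = g"
    by (rule ext) (simp add: partial_def DERIV_imp_deriv[OF g(2)])
  with g show ?thesis by simp
qed

lemma sm_cont: "sm f \<Longrightarrow> continuous_on UNIV f"
proof (induction rule: sm.induct)
  case (sm_E j \<alpha> k \<beta>)
  have "isCont (\<lambda>x::real^'a. Ef j (\<alpha> * x$k + \<beta>)) x" for x
    by (rule isCont_o2[OF _ Ef_cont]) (intro continuous_intros)
  then show ?case by (simp add: continuous_at_imp_continuous_on)
qed (auto intro!: continuous_intros)

lemma sm_iter: "sm f \<Longrightarrow> sm (iter_partial is f)"
  by (induction "is") (auto intro: sm_partial)

lemma sm_smooth: "sm f \<Longrightarrow> smooth_fun f"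
  unfolding smooth_fun_def
proof (intro allI conjI)
  fix "is" i x assume "sm f"
  then have "sm (iter_partial is f)" by (rule sm_iter)
  then show "continuous_on UNIV (iter_partial is f)" by (rule sm_cont)
  from sm_line_deriv[OF \<open>sm (iter_partial is f)\<close>, of i] show
    "(\<lambda>t. iter_partial is f (x + t *\<^sub>R axis i 1)) differentiable at 0"
    using real_differentiable_def by blast
qed

lemma sm_prod: "finite S \<Longrightarrow> (\<And>k. k \<in> S \<Longrightarrow> sm (F k)) \<Longrightarrow> sm (\<lambda>x. \<Prod>k\<in>S. F k x)"
  by (induction S rule: finite_induct) (auto intro: sm.intros)

definition phib :: "real \<Rightarrow> real^'n::finite \<Rightarrow> real^'n \<Rightarrow> real^'n \<Rightarrow> real" where
  "phib n a b x = (\<Prod>k\<in>UNIV. Ef 0 (n * x$k + (- n * a$k)) * Ef 0 ((-n) * x$k + n * b$k))"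

lemma phib_sm: "sm (phib n a b)"
  unfolding phib_def[abs_def]
  by (intro sm_prod sm.intros) auto

lemma phib_support: "phib n a b x \<noteq> 0 \<Longrightarrow> n > 0 \<Longrightarrow> x \<in> cbox a b"
proof -
  assume ne: "phib n a b x \<noteq> 0" and n: "n > 0"
  have "a$k \<le> x$k \<and> x$k \<le> b$k" for k
  proof -
    from ne have "Ef 0 (n * x$k + (- n * a$k)) \<noteq> 0" "Ef 0 ((-n) * x$k + n * b$k) \<noteq> 0"
      by (auto simp: phib_def)
    then have "n * x$k + (- n * a$k) > 0" "(-n) * x$k + n * b$k > 0"
      by (auto simp: Ef_def split: if_splits)
    with n show ?thesis
      by (smt (verit, best) mult_le_cancel_left mult_minus_left)
  qed
  then show ?thesis by (simp add: mem_box_cart)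
qed

lemma phib_test: "n > 0 \<Longrightarrow> test_fun (phib n a b)"
  unfolding test_fun_def
proof
  assume "n > 0"
  show "smooth_fun (phib n a b)" by (rule sm_smooth[OF phib_sm])
  have "{x. phib n a b x \<noteq> 0} \<subseteq> cbox a b" using phib_support \<open>n > 0\<close> by blast
  then have "bounded {x. phib n a b x \<noteq> 0}" using bounded_cbox bounded_subset by blast
  then show "compact (closure {x. phib n a b x \<noteq> 0})" by (simp add: compact_closure)
qed

lemma phib_bound: "\<bar>phib n a b x\<bar> \<le> 1"
proof -
  have "(\<Prod>k\<in>UNIV. \<bar>Ef 0 (n * x$k + (- n * a$k)) * Ef 0 ((-n) * x$k + n * b$k)\<bar>) \<le> (\<Prod>k\<in>(UNIV::'a set). 1)"
    by (intro prod_mono) (auto simp: abs_mult Ef0_bounds intro!: mult_le_one)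
  then show ?thesis by (simp add: phib_def abs_prod)
qed

lemma phib_lim: "(\<lambda>j. phib (real (Suc j)) a b x) \<longlonglongrightarrow> indicator (box a b) x"
proof (cases "x \<in> box a b")
  case True
  then have ab: "a$k < x$k" "x$k < b$k" for k by (auto simp: mem_box_cart)
  have lim1: "(\<lambda>j. Ef 0 (c * real (Suc j))) \<longlonglongrightarrow> 1" if c: "c > 0" for c :: real
  proof -
    have "filterlim (\<lambda>j. c * real (Suc j)) at_top sequentially"
      by (rule filterlim_tendsto_pos_mult_at_top[OF tendsto_const c])
         (rule filterlim_compose[OF filterlim_real_sequentially filterlim_Suc])
    then have "(\<lambda>j. inverse (c * real (Suc j))) \<longlonglongrightarrow> 0" by (rule tendsto_inverse_0_at_top)
    then have "(\<lambda>j. exp (- inverse (c * real (Suc j)))) \<longlonglongrightarrow> exp (- 0)"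
      by (intro tendsto_exp tendsto_minus)
    moreover have "Ef 0 (c * real (Suc j)) = exp (- inverse (c * real (Suc j)))" for j
      using c by (simp add: Ef0_simp divide_inverse)
    ultimately show ?thesis by simp
  qed
  have "(\<lambda>j. \<Prod>k\<in>UNIV. Ef 0 ((x$k - a$k) * real (Suc j)) * Ef 0 ((b$k - x$k) * real (Suc j))) \<longlonglongrightarrow> (\<Prod>k\<in>(UNIV::'a set). 1 * 1)"
    using ab by (intro tendsto_prod tendsto_mult lim1) auto
  moreover have "phib (real (Suc j)) a b x = (\<Prod>k\<in>UNIV. Ef 0 ((x$k - a$k) * real (Suc j)) * Ef 0 ((b$k - x$k) * real (Suc j)))" for j
    by (simp add: phib_def algebra_simps)
  ultimately show ?thesis using True by simp
next
  case False
  then obtain k where "x$k \<le> a$k \<or> b$k \<le> x$k" by (auto simp: mem_box_cart not_less)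
  have "Ef 0 (real (Suc j) * x$k + (- real (Suc j) * a$k)) * Ef 0 ((- real (Suc j)) * x$k + real (Suc j) * b$k) = 0" for j
  proof -
    have "real (Suc j) * x$k + (- real (Suc j) * a$k) = real (Suc j) * (x$k - a$k)"
      "(- real (Suc j)) * x$k + real (Suc j) * b$k = real (Suc j) * (b$k - x$k)"
      by (simp_all add: algebra_simps)
    moreover have "real (Suc j) * (x$k - a$k) \<le> 0 \<or> real (Suc j) * (b$k - x$k) \<le> 0"
      using \<open>x$k \<le> a$k \<or> b$k \<le> x$k\<close> by (auto simp: mult_nonneg_nonpos)
    ultimately show ?thesis by (auto simp: Ef0_simp)
  qed
  then have "phib (real (Suc j)) a b x = 0" for j
    unfolding phib_def by (intro prod_zero) auto
  then show ?thesis using False by simp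
qed

lemma int_cs:
  fixes f :: "real^'n::finite \<Rightarrow> real"
  assumes "continuous_on UNIV f" "\<And>x. norm x > \<rho> \<Longrightarrow> f x = 0"
  shows "integrable lborel f"
proof -
  have "integrable lborel (\<lambda>x. indicator (cball 0 \<rho>) x *\<^sub>R f x)"
    by (rule borel_integrable_compact) (auto intro: continuous_on_subset[OF assms(1)])
  moreover have "(\<lambda>x. indicator (cball 0 \<rho>) x *\<^sub>R f x) = f"
    using assms(2) by (auto simp: indicator_def fun_eq_iff not_le)
  ultimately show ?thesis by simp
qed

lemma bound_cs:
  fixes f :: "real^'n::finite \<Rightarrow> real"
  assumes "continuous_on UNIV f" "\<And>x. norm x > \<rho> \<Longrightarrow> f x = 0"
  shows "\<exists>M\<ge>0. \<forall>x. \<bar>f x\<bar> \<le> M"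
proof -
  have "compact (f ` cball 0 \<rho>)"
    by (rule compact_continuous_image) (auto intro: continuous_on_subset[OF assms(1)])
  then obtain M where M: "\<And>y. y \<in> f ` cball 0 \<rho> \<Longrightarrow> norm y \<le> M"
    using compact_imp_bounded bounded_iff by metis
  have "\<bar>f x\<bar> \<le> max M 0" for x
  proof (cases "norm x \<le> \<rho>")
    case True then show ?thesis using M[of "f x"] by auto
  next
    case False then show ?thesis using assms(2)[of x] by auto
  qed
  then show ?thesis by (intro exI[of _ "max M 0"]) auto
qed

lemma translate_int:
  fixes w :: "real^'n::finite \<Rightarrow> real"
  assumes "w \<in> borel_measurable borel"
  shows "(\<integral>x. w (x + c) \<partial>lborel) = (\<integral>x. w x \<partial>lborel)"
proof -
  have "(\<integral>x. w x \<partial>lborel) = (\<integral>x. w x \<partial>(distr lborel borel ((+) c)))"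
    by (simp add: lborel_distr_plus)
  also have "\<dots> = (\<integral>x. w (c + x) \<partial>lborel)"
    by (rule integral_distr) (use assms in auto)
  finally show ?thesis by (simp add: add.commute)
qed

lemma int_line_deriv_zero:
  fixes w D :: "real^'n::finite \<Rightarrow> real"
  assumes cw: "continuous_on UNIV w" and cD: "continuous_on UNIV D"
    and der: "\<And>x. ((\<lambda>t. w (x + t *\<^sub>R axis j 1)) has_real_derivative D x) (at 0)"
    and supp: "\<And>x. norm x > \<rho> \<Longrightarrow> w x = 0 \<and> D x = 0"
  shows "(\<integral>x. D x \<partial>lborel) = 0"
proof -
  define e :: "real^'n" where "e = axis j 1"
  have ne: "norm e = 1" by (simp add: e_def)
  have der': "((\<lambda>s. w (x + s *\<^sub>R e)) has_real_derivative D (x + t *\<^sub>R e)) (at t)" for x t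
  proof -
    have "((\<lambda>s. w ((x + t *\<^sub>R e) + s *\<^sub>R e)) has_real_derivative D (x + t *\<^sub>R e)) (at 0)"
      using der[of "x + t *\<^sub>R e"] by (simp add: e_def)
    moreover have "(\<lambda>s. w ((x + t *\<^sub>R e) + s *\<^sub>R e)) = (\<lambda>s. (\<lambda>s. w (x + s *\<^sub>R e)) (s + t))"
      by (simp add: algebra_simps scaleR_add_left)
    ultimately show ?thesis using DERIV_shift[of "\<lambda>s. w (x + s *\<^sub>R e)" _ 0 t] by simp
  qed
  have mw[measurable]: "w \<in> borel_measurable borel" using cw by (simp add: borel_measurable_continuous_onI)
  have mD[measurable]: "D \<in> borel_measurable borel" using cD by (simp add: borel_measurable_continuous_onI)
  have iw: "integrable lborel w" by (rule int_cs[OF cw]) (use supp in auto)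
  obtain M where M: "M \<ge> 0" "\<And>x. \<bar>D x\<bar> \<le> M" using bound_cs[OF cD, of \<rho>] supp by auto
  define h :: "nat \<Rightarrow> real" where "h n = inverse (real (Suc n))" for n
  have hpos: "h n > 0" "h n \<le> 1" for n by (auto simp: h_def field_simps)
  define q where "q n x = (w (x + h n *\<^sub>R e) - w x) / h n" for n x
  have iwt: "integrable lborel (\<lambda>x. w (x + c))" for c
  proof (rule int_cs[where \<rho>="\<rho> + norm c"])
    show "continuous_on UNIV (\<lambda>x. w (x + c))"
      by (rule continuous_on_compose2[OF cw]) (auto intro!: continuous_intros)
    fix x :: "real^'n" assume "\<rho> + norm c < norm x"
    moreover have "norm x \<le> norm (x + c) + norm c" by (metis add_diff_cancel norm_triangle_ineq4)
    ultimately show "w (x + c) = 0" using supp[of "x + c"] by auto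
  qed
  have qint: "(\<integral>x. q n x \<partial>lborel) = 0" for n
  proof -
    have "(\<integral>x. q n x \<partial>lborel) = ((\<integral>x. w (x + h n *\<^sub>R e) \<partial>lborel) - (\<integral>x. w x \<partial>lborel)) / h n"
      unfolding q_def using iwt iw by (simp add: Bochner_Integration.integral_diff)
    then show ?thesis using translate_int[OF mw] by simp
  qed
  have lim: "(\<lambda>n. q n x) \<longlonglongrightarrow> D x" for x
  proof -
    have "((\<lambda>y. (w (x + y *\<^sub>R e) - w (x + 0 *\<^sub>R e)) / (y - 0)) \<longlongrightarrow> D x) (at 0)"
      using der[of x] unfolding has_field_derivative_iff e_def .
    moreover have "filterlim h (at 0) sequentially"
    proof -
      have "h \<longlonglongrightarrow> 0" unfolding h_def by (rule LIMSEQ_inverse_real_of_nat)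
      then show ?thesis unfolding filterlim_at using hpos(1) by (auto intro!: always_eventually simp: less_irrefl_nat dual_order.strict_implies_not_eq)
    qed
    ultimately have "((\<lambda>n. (w (x + h n *\<^sub>R e) - w (x + 0 *\<^sub>R e)) / (h n - 0)) \<longlongrightarrow> D x) sequentially"
      by (rule filterlim_compose)
    then show ?thesis by (simp add: q_def)
  qed
  have bnd: "norm (q n x) \<le> M * indicator (cball 0 (\<rho> + 1)) x" for n x
  proof (cases "x \<in> cball 0 (\<rho> + 1)")
    case True
    from MVT2[OF hpos(1)[of n], where f="\<lambda>s. w (x + s *\<^sub>R e)" and f'="\<lambda>s. D (x + s *\<^sub>R e)"] der'
    obtain z where "w (x + h n *\<^sub>R e) - w (x + 0 *\<^sub>R e) = (h n - 0) * D (x + z *\<^sub>R e)" by blast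
    then have "q n x = D (x + z *\<^sub>R e)" using hpos(1)[of n] by (simp add: q_def)
    then show ?thesis using True M by simp
  next
    case False
    then have nx: "norm x > \<rho> + 1" by simp
    have "norm x \<le> norm (x + h n *\<^sub>R e) + h n" using norm_triangle_ineq4[of "x + h n *\<^sub>R e" "h n *\<^sub>R e"] ne hpos[of n] by simp
    then have "norm (x + h n *\<^sub>R e) > \<rho>" using nx hpos[of n] by linarith
    then show ?thesis using supp[of x] supp[of "x + h n *\<^sub>R e"] nx False by (simp add: q_def)
  qed
  have "(\<lambda>n. \<integral>x. q n x \<partial>lborel) \<longlonglongrightarrow> (\<integral>x. D x \<partial>lborel)"
  proof (rule integral_dominated_convergence[where w="\<lambda>x::real^'n. M * indicator (cball 0 (\<rho> + 1)) x"])
    show "integrable lborel (\<lambda>x::real^'n. M * indicator (cball 0 (\<rho> + 1)) x)"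
      using emeasure_compact_finite[OF compact_cball[of "0::real^'n" "\<rho> + 1"]]
      by (intro integrable_mult_right integrable_real_indicator) (simp add: less_top[symmetric])
    show "(\<lambda>x. q n x) \<in> borel_measurable lborel" for n unfolding q_def by measurable
    show "D \<in> borel_measurable lborel" by simp
    show "AE x in lborel. (\<lambda>i. q i x) \<longlonglongrightarrow> D x" using lim by simp
    show "AE x in lborel. norm (q i x) \<le> M * indicator (cball 0 (\<rho> + 1)) x" for i
      using bnd by simp
  qed
  then have "(\<lambda>n. 0::real) \<longlonglongrightarrow> (\<integral>x. D x \<partial>lborel)" by (simp add: qint)
  then show ?thesis by (simp add: LIMSEQ_const_iff)
qed

lemma weak_deriv_C1:
  fixes w D :: "real^'n::finite \<Rightarrow> real"
  assumes cw: "continuous_on UNIV w" and cD: "continuous_on UNIV D"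
    and der: "\<And>x. ((\<lambda>t. w (x + t *\<^sub>R axis j 1)) has_real_derivative D x) (at 0)"
    and supp: "\<And>x. norm x > \<rho> \<Longrightarrow> w x = 0 \<and> D x = 0"
  shows "weak_deriv j w D"
  unfolding weak_deriv_def
proof (intro allI impI)
  fix \<phi> :: "real^'n \<Rightarrow> real" assume "test_fun \<phi>"
  then have sm: "smooth_fun \<phi>" by (simp add: test_fun_def)
  have c\<phi>: "continuous_on UNIV \<phi>" using sm unfolding smooth_fun_def by (metis iter_partial.simps(1))
  have cp\<phi>: "continuous_on UNIV (partial j \<phi>)" using sm unfolding smooth_fun_def by (metis iter_partial.simps)
  have dp: "((\<lambda>t. \<phi> (x + t *\<^sub>R axis j 1)) has_real_derivative partial j \<phi> x) (at 0)" for x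
  proof -
    have "(\<lambda>t. \<phi> (x + t *\<^sub>R axis j 1)) differentiable at 0"
      using sm unfolding smooth_fun_def by (metis iter_partial.simps(1))
    then show ?thesis unfolding partial_def using DERIV_deriv_iff_real_differentiable by blast
  qed
  have i1: "integrable lborel (\<lambda>x. w x * partial j \<phi> x)"
    by (rule int_cs[where \<rho>=\<rho>]) (use cw cp\<phi> supp in \<open>auto intro!: continuous_intros\<close>)
  have i2: "integrable lborel (\<lambda>x. D x * \<phi> x)"
    by (rule int_cs[where \<rho>=\<rho>]) (use cD c\<phi> supp in \<open>auto intro!: continuous_intros\<close>)
  have "(\<integral>x. D x * \<phi> x + w x * partial j \<phi> x \<partial>lborel) = 0"
  proof (rule int_line_deriv_zero[where w="\<lambda>x. w x * \<phi> x" and \<rho>=\<rho> and j=j])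
    show "continuous_on UNIV (\<lambda>x. w x * \<phi> x)" using cw c\<phi> by (auto intro!: continuous_intros)
    show "continuous_on UNIV (\<lambda>x. D x * \<phi> x + w x * partial j \<phi> x)"
      using cw c\<phi> cD cp\<phi> by (auto intro!: continuous_intros)
    show "((\<lambda>t. w (x + t *\<^sub>R axis j 1) * \<phi> (x + t *\<^sub>R axis j 1)) has_real_derivative
        D x * \<phi> x + w x * partial j \<phi> x) (at 0)" for x
      using DERIV_mult[OF der[of x] dp[of x]] by (simp add: mult.commute)
  qed (use supp in auto)
  then have "(\<integral>x. D x * \<phi> x \<partial>lborel) + (\<integral>x. w x * partial j \<phi> x \<partial>lborel) = 0"
    using i1 i2 by (simp add: Bochner_Integration.integral_add)
  then show "integrable lborel (\<lambda>x. w x * partial j \<phi> x) \<and> integrable lborel (\<lambda>x. D x * \<phi> x) \<and>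
      (\<integral>x. w x * partial j \<phi> x \<partial>lborel) = - (\<integral>x. D x * \<phi> x \<partial>lborel)"
    using i1 i2 by linarith
qed

lemma box_zero_AE:
  fixes g :: "real^'n::finite \<Rightarrow> real"
  assumes g[measurable]: "g \<in> borel_measurable lborel"
    and li: "\<And>a b. integrable lborel (\<lambda>x. g x * indicator (box a b) x)"
    and z: "\<And>a b. (\<integral>x. g x * indicator (box a b) x \<partial>lborel) = 0"
  shows "AE x in lborel. g x = 0"
proof -
  define P where "P x = ennreal (max 0 (g x))" for x
  define N where "N x = ennreal (max 0 (- g x))" for x
  have [measurable]: "P \<in> borel_measurable lborel" "N \<in> borel_measurable lborel"
    unfolding P_def[abs_def] N_def[abs_def] by measurable
  have ip: "integrable lborel (\<lambda>x. max 0 (g x) * indicator (box a b) x)" for a b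
    by (rule Bochner_Integration.integrable_bound[OF li[of a b]]) (auto simp: indicator_def)
  have in_: "integrable lborel (\<lambda>x. max 0 (- g x) * indicator (box a b) x)" for a b
    by (rule Bochner_Integration.integrable_bound[OF li[of a b]]) (auto simp: indicator_def)
  have eP: "emeasure (density lborel P) (box a b) = ennreal (\<integral>x. max 0 (g x) * indicator (box a b) x \<partial>lborel)" for a b
  proof -
    have "emeasure (density lborel P) (box a b) = (\<integral>\<^sup>+ x. P x * indicator (box a b) x \<partial>lborel)"
      by (rule emeasure_density) auto
    also have "\<dots> = (\<integral>\<^sup>+ x. ennreal (max 0 (g x) * indicator (box a b) x) \<partial>lborel)"
      by (intro nn_integral_cong) (auto simp: P_def indicator_def)
    also have "\<dots> = ennreal (\<integral>x. max 0 (g x) * indicator (box a b) x \<partial>lborel)"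
      by (rule nn_integral_eq_integral[OF ip]) auto
    finally show ?thesis .
  qed
  have eN: "emeasure (density lborel N) (box a b) = ennreal (\<integral>x. max 0 (- g x) * indicator (box a b) x \<partial>lborel)" for a b
  proof -
    have "emeasure (density lborel N) (box a b) = (\<integral>\<^sup>+ x. N x * indicator (box a b) x \<partial>lborel)"
      by (rule emeasure_density) auto
    also have "\<dots> = (\<integral>\<^sup>+ x. ennreal (max 0 (- g x) * indicator (box a b) x) \<partial>lborel)"
      by (intro nn_integral_cong) (auto simp: N_def indicator_def)
    also have "\<dots> = ennreal (\<integral>x. max 0 (- g x) * indicator (box a b) x \<partial>lborel)"
      by (rule nn_integral_eq_integral[OF in_]) auto
    finally show ?thesis .
  qed
  have eq: "(\<integral>x. max 0 (g x) * indicator (box a b) x \<partial>lborel) = (\<integral>x. max 0 (- g x) * indicator (box a b) x \<partial>lborel)" for a b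
  proof -
    have "(\<integral>x. max 0 (g x) * indicator (box a b) x \<partial>lborel) - (\<integral>x. max 0 (- g x) * indicator (box a b) x \<partial>lborel)
        = (\<integral>x. max 0 (g x) * indicator (box a b) x - max 0 (- g x) * indicator (box a b) x \<partial>lborel)"
      using ip in_ by (simp add: Bochner_Integration.integral_diff)
    also have "\<dots> = (\<integral>x. g x * indicator (box a b) x \<partial>lborel)"
      by (intro Bochner_Integration.integral_cong) (auto simp: indicator_def)
    finally show ?thesis using z[of a b] by simp
  qed
  have "density lborel P = density lborel N"
  proof (rule measure_eqI_generator_eq[where E="range (\<lambda>(a, b). box a b :: (real^'n) set)" and \<Omega>=UNIV
        and A="\<lambda>n::nat. box (- (real n *\<^sub>R One)) (real n *\<^sub>R One)"])
    show "Int_stable (range (\<lambda>(a, b). box a b :: (real^'n) set))"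
      by (auto simp: Int_stable_def box_Int_box)
    show "range (\<lambda>(a, b). box a b :: (real^'n) set) \<subseteq> Pow UNIV" by simp
    show "sets (density lborel P) = sigma_sets UNIV (range (\<lambda>(a, b). box a b :: (real^'n) set))"
      by (simp add: borel_eq_box)
    show "sets (density lborel N) = sigma_sets UNIV (range (\<lambda>(a, b). box a b :: (real^'n) set))"
      by (simp add: borel_eq_box)
    show "range (\<lambda>n::nat. box (- (real n *\<^sub>R One)) (real n *\<^sub>R One)) \<subseteq> range (\<lambda>(a, b). box a b :: (real^'n) set)"
      by auto
    show "(\<Union>i::nat. box (- (real i *\<^sub>R One)) (real i *\<^sub>R One)) = (UNIV :: (real^'n) set)"
      by (rule UN_box_eq_UNIV)
    show "emeasure (density lborel P) (box (- (real i *\<^sub>R One)) (real i *\<^sub>R One)) \<noteq> \<infinity>" for i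
      by (simp add: eP)
    show "emeasure (density lborel P) X = emeasure (density lborel N) X"
      if "X \<in> range (\<lambda>(a, b). box a b :: (real^'n) set)" for X
      using that eP eN eq by auto
  qed
  then have "AE x in lborel. P x = N x"
    by (intro sigma_finite_measure.density_unique[OF sigma_finite_lborel]) auto
  then show ?thesis
    by (rule AE_mp) (auto intro!: AE_I2 simp: P_def N_def max_def split: if_splits)
qed


lemma L2_loc:
  fixes g :: "real^'n::finite \<Rightarrow> real"
  assumes "L2 g"
  shows "integrable lborel (\<lambda>x. \<bar>g x\<bar> * indicator (cbox a b) x)"
proof -
  have [measurable]: "g \<in> borel_measurable lborel" and i2: "integrable lborel (\<lambda>x. (g x)\<^sup>2)"
    using assms by (auto simp: L2_def)
  have i3: "integrable lborel (\<lambda>x. indicator (cbox a b) x *\<^sub>R (g x)\<^sup>2)"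
    by (rule integrable_mult_indicator[OF _ i2]) auto
  have i4: "integrable lborel (\<lambda>x. indicator (cbox a b) x :: real)"
    using emeasure_compact_finite[OF compact_cbox[of a b]]
    by (intro integrable_real_indicator) (simp_all add: less_top[symmetric])
  show ?thesis
  proof (rule Bochner_Integration.integrable_bound[OF Bochner_Integration.integrable_add[OF i3 i4]])
    show "AE x in lborel. norm (\<bar>g x\<bar> * indicator (cbox a b) x) \<le> norm (indicator (cbox a b) x *\<^sub>R (g x)\<^sup>2 + indicator (cbox a b) x)"
    proof (rule AE_I2)
      fix x
      have "0 \<le> (\<bar>g x\<bar> - 1)\<^sup>2" by simp
      then have "0 \<le> \<bar>g x\<bar>\<^sup>2 - 2 * \<bar>g x\<bar> + 1" by (simp add: power2_eq_square algebra_simps)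
      then have "\<bar>g x\<bar> \<le> (g x)\<^sup>2 + 1" by (simp add: power2_abs)
      then show "norm (\<bar>g x\<bar> * indicator (cbox a b) x) \<le> norm (indicator (cbox a b) x *\<^sub>R (g x)\<^sup>2 + indicator (cbox a b) x)"
        by (auto simp: indicator_def)
    qed
  qed measurable
qed

lemma test_zero_AE:
  fixes g :: "real^'n::finite \<Rightarrow> real"
  assumes L: "L2 g"
    and z: "\<And>\<phi>. test_fun \<phi> \<Longrightarrow> (\<integral>x. g x * \<phi> x \<partial>lborel) = 0"
  shows "AE x in lborel. g x = 0"
proof -
  have [measurable]: "g \<in> borel_measurable lborel" using L by (simp add: L2_def)
  have phim[measurable]: "phib n a b \<in> borel_measurable borel" for n a b
    by (rule borel_measurable_continuous_onI[OF sm_cont[OF phib_sm]])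
  have li: "integrable lborel (\<lambda>x. g x * indicator (box a b) x)" for a b
    by (rule Bochner_Integration.integrable_bound[OF L2_loc[OF L, of a b]]) (auto simp: indicator_def dest: box_subset_cbox[THEN subsetD])
  have "(\<lambda>j. \<integral>x. g x * phib (real (Suc j)) a b x \<partial>lborel) \<longlonglongrightarrow> (\<integral>x. g x * indicator (box a b) x \<partial>lborel)" for a b
  proof (rule integral_dominated_convergence[where w="\<lambda>x. \<bar>g x\<bar> * indicator (cbox a b) x"])
    show "integrable lborel (\<lambda>x. \<bar>g x\<bar> * indicator (cbox a b) x)" by (rule L2_loc[OF L])
    show "AE x in lborel. (\<lambda>j. g x * phib (real (Suc j)) a b x) \<longlonglongrightarrow> g x * indicator (box a b) x"
      by (intro AE_I2 tendsto_mult tendsto_const phib_lim)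
    show "AE x in lborel. norm (g x * phib (real (Suc j)) a b x) \<le> \<bar>g x\<bar> * indicator (cbox a b) x" for j
    proof (rule AE_I2)
      fix x
      show "norm (g x * phib (real (Suc j)) a b x) \<le> \<bar>g x\<bar> * indicator (cbox a b) x"
      proof (cases "x \<in> cbox a b")
        case True
        then show ?thesis using phib_bound[of "real (Suc j)" a b x]
          by (simp add: abs_mult mult_left_le)
      next
        case False
        then show ?thesis using phib_support[of "real (Suc j)" a b x] by auto
      qed
    qed
  qed measurable
  moreover have "(\<integral>x. g x * phib (real (Suc j)) a b x \<partial>lborel) = 0" for j a b
    by (rule z[OF phib_test]) simp
  ultimately have "(\<lambda>j. 0::real) \<longlonglongrightarrow> (\<integral>x. g x * indicator (box a b) x \<partial>lborel)" for a b
    by simp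
  then have "(\<integral>x. g x * indicator (box a b) x \<partial>lborel) = 0" for a b
    by (simp add: LIMSEQ_const_iff)
  then show ?thesis by (intro box_zero_AE li) simp_all
qed

lemma L2_diff:
  assumes "L2 (g1 :: real^'n::finite \<Rightarrow> real)" "L2 g2"
  shows "L2 (\<lambda>x. g1 x - g2 x)"
proof -
  have [measurable]: "g1 \<in> borel_measurable lborel" "g2 \<in> borel_measurable lborel"
    and i: "integrable lborel (\<lambda>x. (g1 x)\<^sup>2)" "integrable lborel (\<lambda>x. (g2 x)\<^sup>2)"
    using assms by (auto simp: L2_def)
  have "integrable lborel (\<lambda>x. (g1 x - g2 x)\<^sup>2)"
  proof (rule Bochner_Integration.integrable_bound[OF Bochner_Integration.integrable_add[OF integrable_mult_right[OF i(1), of 2] integrable_mult_right[OF i(2), of 2]]])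
    have ineq: "(a - b)\<^sup>2 \<le> 2 * a\<^sup>2 + 2 * b\<^sup>2" for a b :: real
    proof -
      have "2 * a\<^sup>2 + 2 * b\<^sup>2 - (a - b)\<^sup>2 = (a + b)\<^sup>2" by algebra
      moreover have "(a + b)\<^sup>2 \<ge> 0" by simp
      ultimately show ?thesis by linarith
    qed
    show "AE x in lborel. norm ((g1 x - g2 x)\<^sup>2) \<le> norm (2 * (g1 x)\<^sup>2 + 2 * (g2 x)\<^sup>2)"
      by (intro AE_I2) (simp add: ineq)
  qed measurable
  then show ?thesis by (simp add: L2_def)
qed

lemma weak_deriv_unique:
  fixes u g1 g2 :: "real^'n::finite \<Rightarrow> real"
  assumes w1: "weak_deriv i u g1" and w2: "weak_deriv i u g2" and L: "L2 g1" "L2 g2"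
  shows "AE x in lborel. g1 x = g2 x"
proof -
  have "AE x in lborel. g1 x - g2 x = 0"
  proof (rule test_zero_AE[OF L2_diff[OF L]])
    fix \<phi> :: "real^'n \<Rightarrow> real" assume t: "test_fun \<phi>"
    from w1 t have a: "integrable lborel (\<lambda>x. g1 x * \<phi> x)"
      "(\<integral>x. u x * partial i \<phi> x \<partial>lborel) = - (\<integral>x. g1 x * \<phi> x \<partial>lborel)"
      by (auto simp: weak_deriv_def)
    from w2 t have b: "integrable lborel (\<lambda>x. g2 x * \<phi> x)"
      "(\<integral>x. u x * partial i \<phi> x \<partial>lborel) = - (\<integral>x. g2 x * \<phi> x \<partial>lborel)"
      by (auto simp: weak_deriv_def)
    have "(\<integral>x. (g1 x - g2 x) * \<phi> x \<partial>lborel) = (\<integral>x. g1 x * \<phi> x - g2 x * \<phi> x \<partial>lborel)"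
      by (simp add: algebra_simps)
    also have "\<dots> = 0" using a b by (simp add: Bochner_Integration.integral_diff)
    finally show "(\<integral>x. (g1 x - g2 x) * \<phi> x \<partial>lborel) = 0" .
  qed
  then show ?thesis by auto
qed

lemma test_partial_meas:
  assumes "test_fun \<phi>"
  shows "partial i \<phi> \<in> borel_measurable borel"
proof -
  have "continuous_on UNIV (partial i \<phi>)"
    using assms unfolding test_fun_def smooth_fun_def by (metis iter_partial.simps)
  then show ?thesis by (simp add: borel_measurable_continuous_onI)
qed

lemma weak_deriv_AE_cong:
  fixes u1 u2 g :: "real^'n::finite \<Rightarrow> real"
  assumes w: "weak_deriv i u1 g" and ae: "AE x in lborel. u1 x = u2 x"
    and m: "u1 \<in> borel_measurable lborel" "u2 \<in> borel_measurable lborel"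
  shows "weak_deriv i u2 g"
  unfolding weak_deriv_def
proof (intro allI impI)
  fix \<phi> :: "real^'n \<Rightarrow> real" assume t: "test_fun \<phi>"
  have [measurable]: "partial i \<phi> \<in> borel_measurable lborel" using test_partial_meas[OF t] by simp
  have [measurable]: "u1 \<in> borel_measurable lborel" "u2 \<in> borel_measurable lborel" using m by auto
  have ae2: "AE x in lborel. u1 x * partial i \<phi> x = u2 x * partial i \<phi> x" using ae by auto
  have e1: "integrable lborel (\<lambda>x. u1 x * partial i \<phi> x) = integrable lborel (\<lambda>x. u2 x * partial i \<phi> x)"
    by (rule integrable_cong_AE) (use ae2 in auto)
  have e2: "(\<integral>x. u1 x * partial i \<phi> x \<partial>lborel) = (\<integral>x. u2 x * partial i \<phi> x \<partial>lborel)"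
    by (rule integral_cong_AE) (use ae2 in auto)
  from w t have w1: "integrable lborel (\<lambda>x. u1 x * partial i \<phi> x)" "integrable lborel (\<lambda>x. g x * \<phi> x)"
     "(\<integral>x. u1 x * partial i \<phi> x \<partial>lborel) = - (\<integral>x. g x * \<phi> x \<partial>lborel)"
    unfolding weak_deriv_def by auto
  show "integrable lborel (\<lambda>x. u2 x * partial i \<phi> x) \<and> integrable lborel (\<lambda>x. g x * \<phi> x) \<and>
      (\<integral>x. u2 x * partial i \<phi> x \<partial>lborel) = - (\<integral>x. g x * \<phi> x \<partial>lborel)"
    using w1 e1 e2 by simp
qed

lemma derivs_AE:
  fixes u :: "real^'n::finite \<Rightarrow> real"
  assumes H: "H2_derivs u G Hh"
  shows "\<forall>i. AE x in lborel. fst (derivs u) i x = G i x"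
    and "\<forall>i j. AE x in lborel. snd (derivs u) i j x = Hh i j x"
proof -
  have D: "H2_derivs u (fst (derivs u)) (snd (derivs u))"
    unfolding derivs_def by (rule someI[where x="(G, Hh)"]) (simp add: H)
  show g: "\<forall>i. AE x in lborel. fst (derivs u) i x = G i x"
    using D H unfolding H2_derivs_def by (metis weak_deriv_unique)
  show "\<forall>i j. AE x in lborel. snd (derivs u) i j x = Hh i j x"
  proof (intro allI)
    fix i j
    have "weak_deriv j (G i) (snd (derivs u) i j)"
      using D H g weak_deriv_AE_cong[of j "fst (derivs u) i" "snd (derivs u) i j" "G i"]
      by (auto simp: H2_derivs_def L2_def)
    then show "AE x in lborel. snd (derivs u) i j x = Hh i j x"
      using D H unfolding H2_derivs_def by (metis weak_deriv_unique)
  qed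
qed

definition profile :: "(real \<Rightarrow> real) \<Rightarrow> (real \<Rightarrow> real) \<Rightarrow> (real \<Rightarrow> real) \<Rightarrow> real \<Rightarrow> bool" where
  "profile F F1 F2 T \<longleftrightarrow> (\<forall>t. (F has_real_derivative F1 t) (at t)) \<and> (\<forall>t. (F1 has_real_derivative F2 t) (at t))
     \<and> continuous_on UNIV F2 \<and> (\<forall>t\<ge>T. F t = 0 \<and> F1 t = 0 \<and> F2 t = 0)"

lemma sq_line:
  fixes x :: "real^'n::finite"
  shows "((\<lambda>t. (x + t *\<^sub>R axis j 1) \<bullet> (x + t *\<^sub>R axis j 1)) has_real_derivative 2 * x$j) (at 0)"
proof -
  have eq: "(\<lambda>t. (x + t *\<^sub>R axis j 1) \<bullet> (x + t *\<^sub>R axis j 1)) = (\<lambda>t. x \<bullet> x + 2 * t * x$j + t * t)"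
    by (rule ext) (simp add: inner_add_left inner_add_right inner_axis inner_commute[of "axis j 1" x] algebra_simps)
  show ?thesis unfolding eq by (auto intro!: derivative_eq_intros)
qed

lemma comp_line:
  fixes x :: "real^'n::finite"
  assumes "\<And>t. (F has_real_derivative F1 t) (at t)"
  shows "((\<lambda>t. F ((x + t *\<^sub>R axis j 1) \<bullet> (x + t *\<^sub>R axis j 1))) has_real_derivative F1 (x \<bullet> x) * (2 * x$j)) (at 0)"
  using DERIV_chain2[OF assms sq_line[of x j]] by simp

lemma coord_line:
  fixes x :: "real^'n::finite"
  shows "((\<lambda>t. (x + t *\<^sub>R axis j 1)$i) has_real_derivative (if i = j then 1 else 0)) (at 0)"
  by (simp add: axis_nth axis_def) (auto intro!: derivative_eq_intros)

lemma supp_sq: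
  fixes x :: "real^'n::finite"
  assumes "norm x > sqrt \<bar>T\<bar>"
  shows "x \<bullet> x \<ge> T"
proof -
  have "sqrt \<bar>T\<bar> ^ 2 < norm x ^ 2" using assms by (intro power_strict_mono) auto
  then show ?thesis by (simp add: power2_norm_eq_inner)
qed

lemma cont_sq:
  assumes "continuous_on UNIV (F :: real \<Rightarrow> real)"
  shows "continuous_on UNIV (\<lambda>x::real^'n::finite. F (x \<bullet> x))"
  by (rule continuous_on_compose2[OF assms]) (auto intro!: continuous_intros)

lemma L2_cs:
  fixes f :: "real^'n::finite \<Rightarrow> real"
  assumes "continuous_on UNIV f" "\<And>x. norm x > \<rho> \<Longrightarrow> f x = 0"
  shows "L2 f"
  unfolding L2_def
proof
  show "f \<in> borel_measurable lborel" using assms(1) by (simp add: borel_measurable_continuous_onI)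
  show "integrable lborel (\<lambda>x. (f x)\<^sup>2)"
    by (rule int_cs[where \<rho>=\<rho>]) (use assms in \<open>auto intro!: continuous_intros\<close>)
qed

definition pG :: "(real \<Rightarrow> real) \<Rightarrow> 'n::finite \<Rightarrow> real^'n \<Rightarrow> real" where
  "pG F1 i x = 2 * F1 (x \<bullet> x) * x$i"

definition pH :: "(real \<Rightarrow> real) \<Rightarrow> (real \<Rightarrow> real) \<Rightarrow> 'n::finite \<Rightarrow> 'n \<Rightarrow> real^'n \<Rightarrow> real" where
  "pH F1 F2 i j x = 4 * F2 (x \<bullet> x) * x$i * x$j + 2 * F1 (x \<bullet> x) * (if i = j then 1 else 0)"

lemma profile_H2_derivs:
  assumes P: "profile F F1 F2 T"
  shows "H2_derivs (\<lambda>x::real^'n::finite. F (x \<bullet> x)) (pG F1) (pH F1 F2)"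
proof -
  have dF: "\<And>t. (F has_real_derivative F1 t) (at t)" and dF1: "\<And>t. (F1 has_real_derivative F2 t) (at t)"
    and cF2: "continuous_on UNIV F2" and z: "\<And>t. t \<ge> T \<Longrightarrow> F t = 0 \<and> F1 t = 0 \<and> F2 t = 0"
    using P by (auto simp: profile_def)
  have cF: "continuous_on UNIV F" using dF by (meson DERIV_isCont continuous_at_imp_continuous_on)
  have cF1: "continuous_on UNIV F1" using dF1 by (meson DERIV_isCont continuous_at_imp_continuous_on)
  have c0: "continuous_on UNIV (\<lambda>x::real^'n. F (x \<bullet> x))" by (rule cont_sq[OF cF])
  have c1: "continuous_on UNIV (\<lambda>x::real^'n. F1 (x \<bullet> x))" by (rule cont_sq[OF cF1])
  have c2: "continuous_on UNIV (\<lambda>x::real^'n. F2 (x \<bullet> x))" by (rule cont_sq[OF cF2])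
  have cG: "continuous_on UNIV (pG F1 i :: real^'n \<Rightarrow> real)" for i
    unfolding pG_def[abs_def] using c1 by (auto intro!: continuous_intros)
  have cH: "continuous_on UNIV (pH F1 F2 i j :: real^'n \<Rightarrow> real)" for i j
    unfolding pH_def[abs_def] using c1 c2 by (auto intro!: continuous_intros)
  have zz: "norm x > sqrt \<bar>T\<bar> \<Longrightarrow> F (x \<bullet> x) = 0 \<and> F1 (x \<bullet> x) = 0 \<and> F2 (x \<bullet> x) = 0" for x :: "real^'n"
    using z supp_sq by blast
  have zG: "norm x > sqrt \<bar>T\<bar> \<Longrightarrow> pG F1 i x = 0" for x :: "real^'n" and i
    using zz by (simp add: pG_def)
  have zH: "norm x > sqrt \<bar>T\<bar> \<Longrightarrow> pH F1 F2 i j x = 0" for x :: "real^'n" and i j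
    using zz by (simp add: pH_def)
  have wG: "weak_deriv i (\<lambda>x::real^'n. F (x \<bullet> x)) (pG F1 i)" for i :: 'n
  proof (rule weak_deriv_C1[OF c0 cG])
    show "((\<lambda>t. F ((x + t *\<^sub>R axis i 1) \<bullet> (x + t *\<^sub>R axis i 1))) has_real_derivative pG F1 i x) (at 0)" for x :: "real^'n"
      using comp_line[OF dF, of x i] by (simp add: pG_def mult.commute mult.left_commute)
  qed (use zz zG in blast)
  have wH: "weak_deriv j (pG F1 i) (pH F1 F2 i j :: real^'n \<Rightarrow> real)" for i j :: 'n
  proof (rule weak_deriv_C1[OF cG[of i] cH[of i j]])
    show "((\<lambda>t. pG F1 i (x + t *\<^sub>R axis j 1)) has_real_derivative pH F1 F2 i j x) (at 0)" for x :: "real^'n"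
    proof -
      have "((\<lambda>t. 2 * F1 ((x + t *\<^sub>R axis j 1) \<bullet> (x + t *\<^sub>R axis j 1)) * (x + t *\<^sub>R axis j 1)$i) has_real_derivative
         2 * (F2 (x \<bullet> x) * (2 * x$j)) * (x + 0 *\<^sub>R axis j 1)$i + (if i = j then 1 else 0) * (2 * F1 ((x + 0 *\<^sub>R axis j 1) \<bullet> (x + 0 *\<^sub>R axis j 1)))) (at 0)"
        by (intro DERIV_mult DERIV_cmult comp_line[OF dF1] coord_line)
      then show ?thesis by (simp add: pG_def pH_def algebra_simps)
    qed
  qed (use zG zH in blast)
  show ?thesis unfolding H2_derivs_def
    using wG wH L2_cs[OF cG zG] L2_cs[OF cH zH] by blast
qed

lemma profile_facts:
  assumes P: "profile F F1 F2 T"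
  defines "u \<equiv> (\<lambda>x::real^'n::finite. F (x \<bullet> x))"
  shows "H2r u"
    and "lap_sq u = (\<integral>x. (4 * F2 (x \<bullet> x) * (x \<bullet> x) + 2 * real CARD('n) * F1 (x \<bullet> x))\<^sup>2 \<partial>(lborel::(real^'n) measure))"
    and "grad_sq u = (\<integral>x. 4 * (F1 (x \<bullet> x))\<^sup>2 * (x \<bullet> x) \<partial>(lborel::(real^'n) measure))"
    and "L2_sq u = (\<integral>x. (F (x \<bullet> x))\<^sup>2 \<partial>(lborel::(real^'n) measure))"
proof -
  have dF: "\<And>t. (F has_real_derivative F1 t) (at t)" and dF1: "\<And>t. (F1 has_real_derivative F2 t) (at t)"
    and cF2: "continuous_on UNIV F2" and z: "\<And>t. t \<ge> T \<Longrightarrow> F t = 0 \<and> F1 t = 0 \<and> F2 t = 0"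
    using P by (auto simp: profile_def)
  have cF: "continuous_on UNIV F" using dF by (meson DERIV_isCont continuous_at_imp_continuous_on)
  have cF1: "continuous_on UNIV F1" using dF1 by (meson DERIV_isCont continuous_at_imp_continuous_on)
  have zz: "norm x > sqrt \<bar>T\<bar> \<Longrightarrow> F (x \<bullet> x) = 0 \<and> F1 (x \<bullet> x) = 0 \<and> F2 (x \<bullet> x) = 0" for x :: "real^'n"
    using z supp_sq by blast
  have HD: "H2_derivs u (pG F1) (pH F1 F2)" unfolding u_def by (rule profile_H2_derivs[OF P])
  have Lu: "L2 u" unfolding u_def by (rule L2_cs[OF cont_sq[OF cF]]) (use zz in blast)
  show "H2r u" unfolding H2r_def H2_def radial_def
  proof (intro conjI exI)
    show "L2 u" by (rule Lu)
    show "H2_derivs u (pG F1) (pH F1 F2)" by (rule HD)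
    show "AE x in lborel. u x = (\<lambda>r. F (r\<^sup>2)) (norm x)"
      by (intro AE_I2) (simp add: u_def power2_norm_eq_inner)
  qed
  show "L2_sq u = (\<integral>x. (F (x \<bullet> x))\<^sup>2 \<partial>(lborel::(real^'n) measure))" by (simp add: L2_sq_def u_def)
  note ae = derivs_AE[OF HD]
  have Dm: "H2_derivs u (fst (derivs u)) (snd (derivs u))"
    unfolding derivs_def by (rule someI[where x="(pG F1, pH F1 F2)"]) (simp add: HD)
  have mH: "snd (derivs u) i j \<in> borel_measurable lborel" for i j
    using Dm by (auto simp: H2_derivs_def L2_def)
  have mG: "fst (derivs u) i \<in> borel_measurable lborel" for i
    using Dm by (auto simp: H2_derivs_def L2_def)
  have cH: "continuous_on UNIV (pH F1 F2 i j :: real^'n \<Rightarrow> real)" for i j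
    unfolding pH_def[abs_def] using cont_sq[OF cF1] cont_sq[OF cF2] by (auto intro!: continuous_intros)
  have cG: "continuous_on UNIV (pG F1 i :: real^'n \<Rightarrow> real)" for i
    unfolding pG_def[abs_def] using cont_sq[OF cF1] by (auto intro!: continuous_intros)
  have sumH: "(\<Sum>i\<in>UNIV. pH F1 F2 i i x) = 4 * F2 (x \<bullet> x) * (x \<bullet> x) + 2 * real CARD('n) * F1 (x \<bullet> x)" for x :: "real^'n"
    by (simp add: pH_def sum.distrib inner_vec_def sum_distrib_left power2_eq_square mult.assoc)
  have "lap_sq u = (\<integral>x. (\<Sum>i\<in>UNIV. pH F1 F2 i i x)\<^sup>2 \<partial>(lborel::(real^'n) measure))"
    unfolding lap_sq_def lapl_def
  proof (rule integral_cong_AE)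
    have "AE x in lborel. \<forall>i\<in>UNIV. snd (derivs u) i i x = pH F1 F2 i i x"
      using ae(2) by (subst AE_finite_all) auto
    then show "AE x in lborel. (\<Sum>i\<in>UNIV. snd (derivs u) i i x)\<^sup>2 = (\<Sum>i\<in>UNIV. pH F1 F2 i i x)\<^sup>2"
      by (rule AE_mp) (auto intro!: AE_I2)
    show "(\<lambda>x::real^'n. (\<Sum>i\<in>UNIV. snd (derivs u) i i x)\<^sup>2) \<in> borel_measurable lborel"
      using mH by (intro borel_measurable_power borel_measurable_sum) auto
    show "(\<lambda>x::real^'n. (\<Sum>i\<in>UNIV. pH F1 F2 i i x)\<^sup>2) \<in> borel_measurable lborel"
      using cH by (intro borel_measurable_power borel_measurable_sum) (auto intro: borel_measurable_continuous_onI)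
  qed
  then show "lap_sq u = (\<integral>x. (4 * F2 (x \<bullet> x) * (x \<bullet> x) + 2 * real CARD('n) * F1 (x \<bullet> x))\<^sup>2 \<partial>(lborel::(real^'n) measure))"
    by (simp add: sumH)
  have "grad_sq u = (\<Sum>i\<in>UNIV. \<integral>x. (pG F1 i x)\<^sup>2 \<partial>(lborel::(real^'n) measure))"
    unfolding grad_sq_def
  proof (rule sum.cong[OF refl], rule integral_cong_AE)
    fix i
    show "AE x in lborel. (fst (derivs u) i x)\<^sup>2 = (pG F1 i x)\<^sup>2"
      using ae(1)[rule_format, of i] by (rule AE_mp) (auto intro!: AE_I2)
    show "(\<lambda>x. (fst (derivs u) i x)\<^sup>2) \<in> borel_measurable lborel" using mG by simp
    show "(\<lambda>x. (pG F1 i x)\<^sup>2) \<in> borel_measurable lborel"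
      using cG by (intro borel_measurable_power) (auto intro: borel_measurable_continuous_onI)
  qed
  also have "\<dots> = (\<integral>x. (\<Sum>i\<in>UNIV. (pG F1 i x)\<^sup>2) \<partial>(lborel::(real^'n) measure))"
  proof (rule Bochner_Integration.integral_sum[symmetric], simp)
    fix i :: 'n show "integrable lborel (\<lambda>x::real^'n. (pG F1 i x)\<^sup>2)"
    proof (rule int_cs[where \<rho>="sqrt \<bar>T\<bar>"])
      show "continuous_on UNIV (\<lambda>x::real^'n. (pG F1 i x)\<^sup>2)" using cG[of i] by (auto intro!: continuous_intros)
      fix x :: "real^'n" assume "sqrt \<bar>T\<bar> < norm x"
      then show "(pG F1 i x)\<^sup>2 = 0" using zz[of x] by (simp add: pG_def)
    qed
  qed
  also have "(\<lambda>x. \<Sum>i\<in>UNIV. (pG F1 i x)\<^sup>2) = (\<lambda>x::real^'n. 4 * (F1 (x \<bullet> x))\<^sup>2 * (x \<bullet> x))"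
  proof (rule ext)
    fix x :: "real^'n"
    have "(\<Sum>i\<in>UNIV. (pG F1 i x)\<^sup>2) = (\<Sum>i\<in>UNIV. (4 * (F1 (x \<bullet> x))\<^sup>2) * (x$i * x$i))"
      by (simp add: pG_def power2_eq_square algebra_simps)
    also have "\<dots> = 4 * (F1 (x \<bullet> x))\<^sup>2 * (x \<bullet> x)"
      by (simp only: sum_distrib_left[symmetric]) (simp add: inner_vec_def)
    finally show "(\<Sum>i\<in>UNIV. (pG F1 i x)\<^sup>2) = 4 * (F1 (x \<bullet> x))\<^sup>2 * (x \<bullet> x)" .
  qed
  finally show "grad_sq u = (\<integral>x. 4 * (F1 (x \<bullet> x))\<^sup>2 * (x \<bullet> x) \<partial>(lborel::(real^'n) measure))" .
qed

definition Mp :: "nat \<Rightarrow> real \<Rightarrow> real" where "Mp k y = (max 0 y) ^ k"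

lemma Mp_deriv:
  assumes "k \<ge> 2"
  shows "(Mp k has_real_derivative real k * Mp (k - 1) y) (at y)"
proof (cases "y > 0")
  case True
  have d: "((\<lambda>y. y ^ k) has_real_derivative real k * y ^ (k - 1)) (at y)"
    using DERIV_pow[of k y] by simp
  have e: "real k * Mp (k - 1) y = real k * y ^ (k - 1)" using True by (simp add: Mp_def)
  have "((\<lambda>y. y ^ k) has_real_derivative real k * Mp (k - 1) y) (at y)" using d by (simp only: e)
  then show ?thesis
    by (rule has_field_derivative_transform_within_open[where S="{0<..}"]) (use True in \<open>auto simp: Mp_def\<close>)
next
  case False
  show ?thesis
  proof (cases "y < 0")
    case True
    have "((\<lambda>_. 0) has_real_derivative 0) (at y)" by simp
    then have d: "(Mp k has_real_derivative 0) (at y)"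
      by (rule has_field_derivative_transform_within_open[where S="{..<0}"]) (use True assms in \<open>auto simp: Mp_def\<close>)
    have e: "real k * Mp (k - 1) y = 0" using True assms by (simp add: Mp_def)
    show ?thesis using d by (simp only: e)
  next
    case False
    with \<open>\<not> y > 0\<close> have y0: "y = 0" by simp
    have R: "((\<lambda>h. (Mp k h - Mp k 0) / (h - 0)) \<longlongrightarrow> 0) (at_right 0)"
    proof -
      have "((\<lambda>h::real. h ^ (k - 1)) \<longlongrightarrow> 0 ^ (k - 1)) (at_right 0)"
        by (intro tendsto_intros)
      then have "((\<lambda>h::real. h ^ (k - 1)) \<longlongrightarrow> 0) (at_right 0)" using assms by simp
      then show ?thesis
      proof (rule Lim_transform_eventually)
        show "\<forall>\<^sub>F x in at_right 0. x ^ (k - 1) = (Mp k x - Mp k 0) / (x - 0)"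
        proof (rule eventually_mono[OF eventually_at_right_less])
          fix x :: real assume "0 < x"
          then show "x ^ (k - 1) = (Mp k x - Mp k 0) / (x - 0)"
            using assms by (simp add: Mp_def power_eq_if)
        qed
      qed
    qed
    have L: "((\<lambda>h. (Mp k h - Mp k 0) / (h - 0)) \<longlongrightarrow> 0) (at_left 0)"
    proof (rule Lim_transform_eventually[where f="\<lambda>_. 0"])
      show "\<forall>\<^sub>F x in at_left 0. 0 = (Mp k x - Mp k 0) / (x - 0)"
        using eventually_at_left_real[where a="0::real" and b="-1"] assms
        by (auto elim!: eventually_mono simp: Mp_def)
    qed simp
    have "((\<lambda>h. (Mp k h - Mp k 0) / (h - 0)) \<longlongrightarrow> 0) (at 0)"
      using filterlim_split_at[OF L R] .
    moreover have "real k * Mp (k - 1) 0 = 0" using assms by (simp add: Mp_def)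
    ultimately show ?thesis unfolding y0 has_field_derivative_iff by metis
  qed
qed

lemma Mp1_cont: "continuous_on UNIV (Mp 1)"
  unfolding Mp_def[abs_def] by (auto intro!: continuous_intros)

lemma Mp_zero: "y \<le> 0 \<Longrightarrow> k > 0 \<Longrightarrow> Mp k y = 0"
  by (simp add: Mp_def)

lemma Mp_nonneg: "Mp k y \<ge> 0"
  by (simp add: Mp_def)

definition aa :: "nat \<Rightarrow> real" where "aa k = 3 * real k + 1"
definition bb :: "nat \<Rightarrow> real" where "bb k = 3 * real k + 2"
definition Bq :: "nat \<Rightarrow> real \<Rightarrow> real" where "Bq k t = (t - aa k) * (bb k - t)"
definition Bq1 :: "nat \<Rightarrow> real \<Rightarrow> real" where "Bq1 k t = aa k + bb k - 2 * t"

definition BF :: "nat \<Rightarrow> real \<Rightarrow> real" where "BF k t = Mp 3 (Bq k t)"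
definition BF1 :: "nat \<Rightarrow> real \<Rightarrow> real" where "BF1 k t = 3 * Mp 2 (Bq k t) * Bq1 k t"
definition BF2 :: "nat \<Rightarrow> real \<Rightarrow> real" where
  "BF2 k t = 6 * Mp 1 (Bq k t) * (Bq1 k t)\<^sup>2 - 6 * Mp 2 (Bq k t)"

lemma Bq_deriv: "(Bq k has_real_derivative Bq1 k t) (at t)"
  unfolding Bq_def[abs_def] Bq1_def by (auto intro!: derivative_eq_intros simp: algebra_simps)

lemma Bq1_deriv: "(Bq1 k has_real_derivative -2) (at t)"
  unfolding Bq1_def[abs_def] by (auto intro!: derivative_eq_intros)

lemma BF_deriv: "(BF k has_real_derivative BF1 k t) (at t)"
proof -
  have "((\<lambda>t. Mp 3 (Bq k t)) has_real_derivative real 3 * Mp (3 - 1) (Bq k t) * Bq1 k t) (at t)"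
    by (rule DERIV_chain2[OF Mp_deriv Bq_deriv]) simp
  then show ?thesis by (simp add: BF_def[abs_def] BF1_def)
qed

lemma BF1_deriv: "(BF1 k has_real_derivative BF2 k t) (at t)"
proof -
  have d2: "((\<lambda>t. Mp 2 (Bq k t)) has_real_derivative real 2 * Mp (2 - 1) (Bq k t) * Bq1 k t) (at t)"
    by (rule DERIV_chain2[OF Mp_deriv Bq_deriv]) simp
  have "((\<lambda>t. 3 * Mp 2 (Bq k t) * Bq1 k t) has_real_derivative
      3 * (real 2 * Mp (2 - 1) (Bq k t) * Bq1 k t) * Bq1 k t + (-2) * (3 * Mp 2 (Bq k t))) (at t)"
    by (intro DERIV_mult DERIV_cmult d2 Bq1_deriv)
  then show ?thesis by (simp add: BF1_def[abs_def] BF2_def power2_eq_square algebra_simps)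
qed

lemma BF2_cont: "continuous_on UNIV (BF2 k)"
proof -
  have c1: "continuous_on UNIV (\<lambda>t. Mp 1 (Bq k t))"
    by (rule continuous_on_compose2[OF Mp1_cont]) (auto simp: Bq_def intro!: continuous_intros)
  have c2: "continuous_on UNIV (\<lambda>t. Mp 2 (Bq k t))"
    using Mp_deriv[of 2] Bq_deriv
    by (intro continuous_at_imp_continuous_on ballI DERIV_isCont)
       (rule DERIV_chain2[OF Mp_deriv Bq_deriv], simp)
  show ?thesis unfolding BF2_def[abs_def] Bq1_def using c1 c2 by (auto intro!: continuous_intros)
qed

lemma BF_supp:
  assumes "\<not> (aa k < t \<and> t < bb k)"
  shows "BF k t = 0" "BF1 k t = 0" "BF2 k t = 0"
proof -
  have ab: "aa k < bb k" by (simp add: aa_def bb_def)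
  have "Bq k t \<le> 0"
  proof (cases "t \<le> aa k")
    case True
    then show ?thesis unfolding Bq_def using ab by (intro mult_nonpos_nonneg) auto
  next
    case False
    then have "bb k \<le> t" using assms by auto
    then show ?thesis unfolding Bq_def using False by (intro mult_nonneg_nonpos) auto
  qed
  then show "BF k t = 0" "BF1 k t = 0" "BF2 k t = 0" by (auto simp: BF_def BF1_def BF2_def Mp_zero)
qed

lemma BF_nonneg: "BF k t \<ge> 0" by (simp add: BF_def Mp_nonneg)

lemma BF_pos: "BF k (aa k + 1/2) > 0"
  by (simp add: BF_def Mp_def Bq_def aa_def bb_def)

lemma scale_int:
  fixes f :: "real^'n::finite \<Rightarrow> real"
  assumes [measurable]: "f \<in> borel_measurable borel" and R: "R > 0"
  shows "(\<integral>x. f x \<partial>lborel) = R ^ CARD('n) * (\<integral>x. f (R *\<^sub>R x) \<partial>lborel)"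
proof -
  have L: "(lborel :: (real^'n) measure) = density (distr lborel borel (\<lambda>x. 0 + R *\<^sub>R x)) (\<lambda>_. ennreal (R ^ CARD('n)))"
    using lborel_affine[of R "0::real^'n"] R by simp
  have "(\<integral>x. f x \<partial>lborel) = (\<integral>x. f x \<partial>(density (distr lborel borel (\<lambda>x. 0 + R *\<^sub>R x)) (\<lambda>_. ennreal (R ^ CARD('n)))))"
    by (subst L[symmetric]) simp
  also have "\<dots> = (\<integral>x. R ^ CARD('n) *\<^sub>R f x \<partial>(distr lborel borel (\<lambda>x::real^'n. 0 + R *\<^sub>R x)))"
    by (rule integral_density) (use R in auto)
  also have "\<dots> = (\<integral>x. R ^ CARD('n) *\<^sub>R f (0 + R *\<^sub>R x) \<partial>lborel)"
    by (rule integral_distr) auto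
  also have "\<dots> = R ^ CARD('n) * (\<integral>x. f (R *\<^sub>R x) \<partial>lborel)"
    by simp
  finally show ?thesis .
qed

lemma sum_disj:
  assumes "finite S" "h 0 = 0" "\<And>k l. k \<in> S \<Longrightarrow> l \<in> S \<Longrightarrow> f k \<noteq> 0 \<Longrightarrow> f l \<noteq> 0 \<Longrightarrow> k = l"
  shows "h (\<Sum>k\<in>S. f k) = (\<Sum>k\<in>S. h (f k))"
proof (cases "\<exists>j\<in>S. f j \<noteq> 0")
  case True
  then obtain j where j: "j \<in> S" "f j \<noteq> 0" by blast
  have z: "f k = 0" if "k \<in> S - {j}" for k using assms(3)[of k j] that j by auto
  have "(\<Sum>k\<in>S. f k) = f j + (\<Sum>k\<in>S - {j}. f k)" by (rule sum.remove[OF assms(1) j(1)])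
  also have "(\<Sum>k\<in>S - {j}. f k) = 0" using z by simp
  finally have 1: "(\<Sum>k\<in>S. f k) = f j" by simp
  have "(\<Sum>k\<in>S. h (f k)) = h (f j) + (\<Sum>k\<in>S - {j}. h (f k))" by (rule sum.remove[OF assms(1) j(1)])
  also have "(\<Sum>k\<in>S - {j}. h (f k)) = 0" using z assms(2) by simp
  finally show ?thesis using 1 by simp
next
  case False
  then show ?thesis using assms(2) by simp
qed

lemma int_radial:
  fixes \<phi> :: "real \<Rightarrow> real"
  assumes "continuous_on UNIV \<phi>" "\<And>t. t \<ge> T \<Longrightarrow> \<phi> t = 0"
  shows "integrable lborel (\<lambda>x::real^'n::finite. \<phi> (x \<bullet> x))"
  by (rule int_cs[where \<rho>="sqrt \<bar>T\<bar>"]) (use assms cont_sq supp_sq in blast)+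

lemma aabb_disj: "aa k < t \<Longrightarrow> t < bb k \<Longrightarrow> aa l < t \<Longrightarrow> t < bb l \<Longrightarrow> k = l"
proof (rule ccontr)
  assume *: "aa k < t" "t < bb k" "aa l < t" "t < bb l" "k \<noteq> l"
  show False
  proof (cases "k < l")
    case True
    then have "real k + 1 \<le> real l" by simp
    then show False using * by (simp add: aa_def bb_def)
  next
    case False
    then have "real l + 1 \<le> real k" using *(5) by simp
    then show False using * by (simp add: aa_def bb_def)
  qed
qed

lemma int_disj:
  fixes \<Psi> :: "nat \<Rightarrow> real \<Rightarrow> real" and h w :: "real \<Rightarrow> real"
  assumes c\<Psi>: "\<And>k. continuous_on UNIV (\<Psi> k)" and s\<Psi>: "\<And>k t. \<not> (aa k < t \<and> t < bb k) \<Longrightarrow> \<Psi> k t = 0"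
    and ch: "continuous_on UNIV h" and h0: "h 0 = 0" and cw: "continuous_on UNIV w" and R: "R > 0"
  shows "(\<integral>x. h (\<Sum>k<m. \<Psi> k ((x \<bullet> x) / R\<^sup>2)) * w ((x \<bullet> x) / R\<^sup>2) \<partial>(lborel::(real^'n::finite) measure))
       = (\<Sum>k<m. R ^ CARD('n) * (\<integral>x. h (\<Psi> k (x \<bullet> x)) * w (x \<bullet> x) \<partial>(lborel::(real^'n) measure)))"
proof -
  have pw: "h (\<Sum>k<m. \<Psi> k \<tau>) * w \<tau> = (\<Sum>k<m. h (\<Psi> k \<tau>) * w \<tau>)" for \<tau>
  proof -
    have "h (\<Sum>k<m. \<Psi> k \<tau>) = (\<Sum>k<m. h (\<Psi> k \<tau>))"
      by (rule sum_disj) (use h0 s\<Psi> aabb_disj in blast)+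
    then show ?thesis by (simp add: sum_distrib_right)
  qed
  have cc: "continuous_on UNIV (\<lambda>t. h (\<Psi> k t) * w t)" for k
    by (intro continuous_intros continuous_on_compose2[OF ch c\<Psi>] cw) auto
  have zz: "t \<ge> bb k \<Longrightarrow> h (\<Psi> k t) * w t = 0" for k t using s\<Psi> h0 by simp
  have "(\<integral>x. h (\<Sum>k<m. \<Psi> k ((x \<bullet> x) / R\<^sup>2)) * w ((x \<bullet> x) / R\<^sup>2) \<partial>(lborel::(real^'n) measure))
      = (\<integral>x. (\<Sum>k<m. h (\<Psi> k ((x \<bullet> x) / R\<^sup>2)) * w ((x \<bullet> x) / R\<^sup>2)) \<partial>(lborel::(real^'n) measure))"
    by (simp add: pw)
  also have "\<dots> = (\<Sum>k<m. (\<integral>x. h (\<Psi> k ((x \<bullet> x) / R\<^sup>2)) * w ((x \<bullet> x) / R\<^sup>2) \<partial>(lborel::(real^'n) measure)))"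
  proof (rule Bochner_Integration.integral_sum, simp)
    fix k
    show "integrable lborel (\<lambda>x::real^'n. h (\<Psi> k ((x \<bullet> x) / R\<^sup>2)) * w ((x \<bullet> x) / R\<^sup>2))"
    proof (rule int_radial[where \<phi>="\<lambda>t. h (\<Psi> k (t / R\<^sup>2)) * w (t / R\<^sup>2)" and T="R\<^sup>2 * bb k"])
      show "continuous_on UNIV (\<lambda>t. h (\<Psi> k (t / R\<^sup>2)) * w (t / R\<^sup>2))"
        by (rule continuous_on_compose2[OF cc]) (use R in \<open>auto intro!: continuous_intros\<close>)
      fix t assume "R\<^sup>2 * bb k \<le> t"
      then have "bb k \<le> t / R\<^sup>2" using R by (simp add: field_simps)
      then show "h (\<Psi> k (t / R\<^sup>2)) * w (t / R\<^sup>2) = 0" by (rule zz)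
    qed
  qed
  also have "\<dots> = (\<Sum>k<m. R ^ CARD('n) * (\<integral>x. h (\<Psi> k (x \<bullet> x)) * w (x \<bullet> x) \<partial>(lborel::(real^'n) measure)))"
  proof (rule sum.cong[OF refl])
    fix k
    have m: "(\<lambda>x::real^'n. h (\<Psi> k ((x \<bullet> x) / R\<^sup>2)) * w ((x \<bullet> x) / R\<^sup>2)) \<in> borel_measurable borel"
      by (rule borel_measurable_continuous_onI, rule continuous_on_compose2[OF cc]) (use R in \<open>auto intro!: continuous_intros\<close>)
    have e: "((R *\<^sub>R x) \<bullet> (R *\<^sub>R x)) / R\<^sup>2 = x \<bullet> x" for x :: "real^'n"
      using R by (simp add: power2_eq_square)
    show "(\<integral>x. h (\<Psi> k ((x \<bullet> x) / R\<^sup>2)) * w ((x \<bullet> x) / R\<^sup>2) \<partial>(lborel::(real^'n) measure))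
        = R ^ CARD('n) * (\<integral>x. h (\<Psi> k (x \<bullet> x)) * w (x \<bullet> x) \<partial>(lborel::(real^'n) measure))"
      using scale_int[OF m R] by (simp only: e)
  qed
  finally show ?thesis .
qed

definition CF :: "nat \<Rightarrow> (nat \<Rightarrow> real) \<Rightarrow> real \<Rightarrow> real \<Rightarrow> real" where
  "CF m d R t = (\<Sum>k<m. d k * BF k (t / R\<^sup>2))"
definition CF1 :: "nat \<Rightarrow> (nat \<Rightarrow> real) \<Rightarrow> real \<Rightarrow> real \<Rightarrow> real" where
  "CF1 m d R t = (\<Sum>k<m. d k * BF1 k (t / R\<^sup>2) / R\<^sup>2)"
definition CF2 :: "nat \<Rightarrow> (nat \<Rightarrow> real) \<Rightarrow> real \<Rightarrow> real \<Rightarrow> real" where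
  "CF2 m d R t = (\<Sum>k<m. d k * BF2 k (t / R\<^sup>2) / R ^ 4)"

lemma BF_cont: "continuous_on UNIV (BF k)"
  using BF_deriv by (meson DERIV_isCont continuous_at_imp_continuous_on)
lemma BF1_cont: "continuous_on UNIV (BF1 k)"
  using BF1_deriv by (meson DERIV_isCont continuous_at_imp_continuous_on)

lemma CF_profile:
  assumes R: "R > 0"
  shows "profile (CF m d R) (CF1 m d R) (CF2 m d R) (R\<^sup>2 * bb m)"
proof -
  have sc: "((\<lambda>t. t / R\<^sup>2) has_real_derivative 1 / R\<^sup>2) (at t)" for t
    using DERIV_cdivide[OF DERIV_ident, of "R\<^sup>2" t] by simp
  have d1: "(CF m d R has_real_derivative CF1 m d R t) (at t)" for t
  proof -
    have "((\<lambda>t. \<Sum>k<m. d k * BF k (t / R\<^sup>2)) has_real_derivative (\<Sum>k<m. d k * (BF1 k (t / R\<^sup>2) * (1 / R\<^sup>2)))) (at t)"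
      by (intro DERIV_sum DERIV_cmult DERIV_chain2[OF BF_deriv sc])
    then show ?thesis unfolding CF_def[abs_def] CF1_def by simp
  qed
  have d2: "(CF1 m d R has_real_derivative CF2 m d R t) (at t)" for t
  proof -
    have "((\<lambda>t. \<Sum>k<m. d k * BF1 k (t / R\<^sup>2) / R\<^sup>2) has_real_derivative (\<Sum>k<m. d k * (BF2 k (t / R\<^sup>2) * (1 / R\<^sup>2)) / R\<^sup>2)) (at t)"
      by (intro DERIV_sum DERIV_cdivide DERIV_cmult DERIV_chain2[OF BF1_deriv sc])
    then show ?thesis
      unfolding CF1_def[abs_def] CF2_def by (simp add: power4_eq_xxxx power2_eq_square mult.assoc)
  qed
  have c: "continuous_on UNIV (CF2 m d R)"
    unfolding CF2_def[abs_def]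
    by (intro continuous_intros continuous_on_compose2[OF BF2_cont]) (use R in auto)
  have z: "CF m d R t = 0 \<and> CF1 m d R t = 0 \<and> CF2 m d R t = 0" if t: "R\<^sup>2 * bb m \<le> t" for t
  proof -
    have "\<not> (aa k < t / R\<^sup>2 \<and> t / R\<^sup>2 < bb k)" if "k < m" for k
    proof -
      have "bb k \<le> bb m" using that by (simp add: bb_def)
      moreover have "bb m \<le> t / R\<^sup>2" using t R by (simp add: field_simps)
      ultimately show ?thesis by simp
    qed
    then show ?thesis by (simp add: CF_def CF1_def CF2_def BF_supp)
  qed
  show ?thesis unfolding profile_def using d1 d2 c z by blast
qed

definition ell :: "'n::finite itself \<Rightarrow> nat \<Rightarrow> real" where
  "ell _ k = (\<integral>x. (BF k (x \<bullet> x))\<^sup>2 \<partial>(lborel::(real^'n) measure))"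
definition Lam :: "'n::finite itself \<Rightarrow> nat \<Rightarrow> real \<Rightarrow> real" where
  "Lam _ k t = 4 * BF2 k t * t + 2 * real CARD('n) * BF1 k t"
definition lam :: "'n::finite itself \<Rightarrow> nat \<Rightarrow> real" where
  "lam T k = (\<integral>x. (Lam T k (x \<bullet> x))\<^sup>2 \<partial>(lborel::(real^'n) measure))"
definition gam' :: "'n::finite itself \<Rightarrow> nat \<Rightarrow> real" where
  "gam' _ k = (\<integral>x. (BF1 k (x \<bullet> x))\<^sup>2 * (4 * (x \<bullet> x)) \<partial>(lborel::(real^'n) measure))"
definition Pq :: "'n::finite itself \<Rightarrow> real \<Rightarrow> nat \<Rightarrow> real" where
  "Pq _ q k = (\<integral>x. \<bar>BF k (x \<bullet> x)\<bar> powr q \<partial>(lborel::(real^'n) measure))"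

lemma sq_cont: "continuous_on UNIV (\<lambda>y::real. y\<^sup>2)" by (intro continuous_intros)

lemma CF_facts:
  fixes m :: nat and d :: "nat \<Rightarrow> real" and R :: real
  assumes R: "R > 0"
  defines "v \<equiv> (\<lambda>x::real^'n::finite. CF m d R (x \<bullet> x))"
  shows "H2r v"
    and "L2_sq v = (\<Sum>k<m. R ^ CARD('n) * ((d k)\<^sup>2 * ell TYPE('n) k))"
    and "lap_sq v = (\<Sum>k<m. R ^ CARD('n) * ((d k)\<^sup>2 / R ^ 4 * lam TYPE('n) k))"
    and "grad_sq v = (\<Sum>k<m. R ^ CARD('n) * ((d k)\<^sup>2 / R\<^sup>2 * gam' TYPE('n) k))"
proof -
  note P = profile_facts[OF CF_profile[OF R, of m d], where 'n='n, folded v_def]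
  show "H2r v" by (rule P(1))
  have nN: "R\<^sup>2 \<noteq> 0" using R by simp
  have "L2_sq v = (\<integral>x. (\<Sum>k<m. d k * BF k ((x \<bullet> x) / R\<^sup>2))\<^sup>2 * 1 \<partial>(lborel::(real^'n) measure))"
    unfolding P(4) by (simp add: CF_def)
  also have "\<dots> = (\<Sum>k<m. R ^ CARD('n) * (\<integral>x. (d k * BF k (x \<bullet> x))\<^sup>2 * 1 \<partial>(lborel::(real^'n) measure)))"
    by (rule int_disj[where \<Psi>="\<lambda>k t. d k * BF k t" and h="\<lambda>y. y\<^sup>2" and w="\<lambda>_. 1"])
       (auto intro!: continuous_intros continuous_on_compose2[OF BF_cont] simp: BF_supp R)
  also have "\<dots> = (\<Sum>k<m. R ^ CARD('n) * ((d k)\<^sup>2 * ell TYPE('n) k))"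
    by (simp add: ell_def power_mult_distrib)
  finally show "L2_sq v = (\<Sum>k<m. R ^ CARD('n) * ((d k)\<^sup>2 * ell TYPE('n) k))" .
  have lpw: "4 * CF2 m d R t * t + 2 * real CARD('n) * CF1 m d R t = (\<Sum>k<m. d k * Lam TYPE('n) k (t / R\<^sup>2) / R\<^sup>2)" for t
  proof -
    have "t = R\<^sup>2 * (t / R\<^sup>2)" using nN by simp
    then have "4 * CF2 m d R t * t + 2 * real CARD('n) * CF1 m d R t
       = (\<Sum>k<m. 4 * (d k * BF2 k (t / R\<^sup>2) / R ^ 4) * (R\<^sup>2 * (t / R\<^sup>2)) + 2 * real CARD('n) * (d k * BF1 k (t / R\<^sup>2) / R\<^sup>2))"
      unfolding CF1_def CF2_def by (simp add: sum_distrib_left sum_distrib_right sum.distrib)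
    also have "\<dots> = (\<Sum>k<m. d k * Lam TYPE('n) k (t / R\<^sup>2) / R\<^sup>2)"
      by (rule sum.cong[OF refl]) (use nN in \<open>simp add: Lam_def field_simps power4_eq_xxxx power2_eq_square\<close>)
    finally show ?thesis .
  qed
  have Lam_cont: "continuous_on UNIV (Lam TYPE('n) k)" for k
    unfolding Lam_def[abs_def] using BF1_cont BF2_cont by (auto intro!: continuous_intros)
  have Lam_supp: "\<not> (aa k < t \<and> t < bb k) \<Longrightarrow> Lam TYPE('n) k t = 0" for k t
    by (simp add: Lam_def BF_supp)
  have "lap_sq v = (\<integral>x. (\<Sum>k<m. d k * Lam TYPE('n) k ((x \<bullet> x) / R\<^sup>2) / R\<^sup>2)\<^sup>2 * 1 \<partial>(lborel::(real^'n) measure))"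
    unfolding P(2) by (simp add: lpw)
  also have "\<dots> = (\<Sum>k<m. R ^ CARD('n) * (\<integral>x. (d k * Lam TYPE('n) k (x \<bullet> x) / R\<^sup>2)\<^sup>2 * 1 \<partial>(lborel::(real^'n) measure)))"
    by (rule int_disj[where \<Psi>="\<lambda>k t. d k * Lam TYPE('n) k t / R\<^sup>2" and h="\<lambda>y. y\<^sup>2" and w="\<lambda>_. 1"])
       (auto intro!: continuous_intros continuous_on_compose2[OF Lam_cont] simp: Lam_supp R less_imp_neq[OF R, symmetric])
  also have "\<dots> = (\<Sum>k<m. R ^ CARD('n) * ((d k)\<^sup>2 / R ^ 4 * lam TYPE('n) k))"
  proof (rule sum.cong[OF refl])
    fix k
    have "(\<integral>x. (d k * Lam TYPE('n) k (x \<bullet> x) / R\<^sup>2)\<^sup>2 * 1 \<partial>(lborel::(real^'n) measure))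
        = (\<integral>x. (d k)\<^sup>2 / R ^ 4 * (Lam TYPE('n) k (x \<bullet> x))\<^sup>2 \<partial>(lborel::(real^'n) measure))"
      by (rule Bochner_Integration.integral_cong) (simp_all add: power_mult_distrib power_divide power4_eq_xxxx power2_eq_square mult_ac)
    also have "\<dots> = (d k)\<^sup>2 / R ^ 4 * lam TYPE('n) k" by (simp add: lam_def)
    finally show "R ^ CARD('n) * (\<integral>x. (d k * Lam TYPE('n) k (x \<bullet> x) / R\<^sup>2)\<^sup>2 * 1 \<partial>(lborel::(real^'n) measure))
        = R ^ CARD('n) * ((d k)\<^sup>2 / R ^ 4 * lam TYPE('n) k)" by simp
  qed
  finally show "lap_sq v = (\<Sum>k<m. R ^ CARD('n) * ((d k)\<^sup>2 / R ^ 4 * lam TYPE('n) k))" .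
  have gpw: "4 * (CF1 m d R t)\<^sup>2 * t = (\<Sum>k<m. d k * BF1 k (t / R\<^sup>2))\<^sup>2 * (4 * (t / R\<^sup>2) / R\<^sup>2)" for t
  proof -
    have "CF1 m d R t = (\<Sum>k<m. d k * BF1 k (t / R\<^sup>2)) / R\<^sup>2"
      unfolding CF1_def by (simp add: sum_divide_distrib)
    then show ?thesis using nN by (simp add: field_simps power2_eq_square)
  qed
  have "grad_sq v = (\<integral>x. (\<Sum>k<m. d k * BF1 k ((x \<bullet> x) / R\<^sup>2))\<^sup>2 * (\<lambda>t. 4 * t / R\<^sup>2) ((x \<bullet> x) / R\<^sup>2) \<partial>(lborel::(real^'n) measure))"
    unfolding P(3) by (simp add: gpw)
  also have "\<dots> = (\<Sum>k<m. R ^ CARD('n) * (\<integral>x. (d k * BF1 k (x \<bullet> x))\<^sup>2 * (\<lambda>t. 4 * t / R\<^sup>2) (x \<bullet> x) \<partial>(lborel::(real^'n) measure)))"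
    by (rule int_disj[where \<Psi>="\<lambda>k t. d k * BF1 k t" and h="\<lambda>y. y\<^sup>2" and w="\<lambda>t. 4 * t / R\<^sup>2"])
       (auto intro!: continuous_intros continuous_on_compose2[OF BF1_cont] simp: BF_supp R less_imp_neq[OF R, symmetric])
  also have "\<dots> = (\<Sum>k<m. R ^ CARD('n) * ((d k)\<^sup>2 / R\<^sup>2 * gam' TYPE('n) k))"
  proof (rule sum.cong[OF refl])
    fix k
    have "(\<integral>x. (d k * BF1 k (x \<bullet> x))\<^sup>2 * (\<lambda>t. 4 * t / R\<^sup>2) (x \<bullet> x) \<partial>(lborel::(real^'n) measure))
        = (\<integral>x. (d k)\<^sup>2 / R\<^sup>2 * ((BF1 k (x \<bullet> x))\<^sup>2 * (4 * (x \<bullet> x))) \<partial>(lborel::(real^'n) measure))"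
      by (rule Bochner_Integration.integral_cong) (simp_all add: power_mult_distrib)
    also have "\<dots> = (d k)\<^sup>2 / R\<^sup>2 * gam' TYPE('n) k" by (simp add: gam'_def)
    finally show "R ^ CARD('n) * (\<integral>x. (d k * BF1 k (x \<bullet> x))\<^sup>2 * (\<lambda>t. 4 * t / R\<^sup>2) (x \<bullet> x) \<partial>(lborel::(real^'n) measure))
        = R ^ CARD('n) * ((d k)\<^sup>2 / R\<^sup>2 * gam' TYPE('n) k)" by simp
  qed
  finally show "grad_sq v = (\<Sum>k<m. R ^ CARD('n) * ((d k)\<^sup>2 / R\<^sup>2 * gam' TYPE('n) k))" .
qed

lemma CF_Lpn:
  assumes R: "R > 0" and q: "q > 0"
  shows "Lpn q (\<lambda>x::real^'n::finite. CF m d R (x \<bullet> x)) powr q = (\<Sum>k<m. R ^ CARD('n) * (\<bar>d k\<bar> powr q * Pq TYPE('n) q k))"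
proof -
  have hc: "continuous_on UNIV (\<lambda>y::real. \<bar>y\<bar> powr q)"
    by (rule continuous_on_powr') (use q in \<open>auto intro!: continuous_intros\<close>)
  have "(\<integral>x. \<bar>CF m d R (x \<bullet> x)\<bar> powr q \<partial>(lborel::(real^'n) measure))
      = (\<integral>x. \<bar>\<Sum>k<m. d k * BF k ((x \<bullet> x) / R\<^sup>2)\<bar> powr q * 1 \<partial>(lborel::(real^'n) measure))"
    by (simp add: CF_def)
  also have "\<dots> = (\<Sum>k<m. R ^ CARD('n) * (\<integral>x. \<bar>d k * BF k (x \<bullet> x)\<bar> powr q * 1 \<partial>(lborel::(real^'n) measure)))"
    by (rule int_disj[where \<Psi>="\<lambda>k t. d k * BF k t" and h="\<lambda>y. \<bar>y\<bar> powr q" and w="\<lambda>_. 1"])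
       (auto intro!: continuous_intros continuous_on_compose2[OF BF_cont] simp: BF_supp R hc)
  also have "\<dots> = (\<Sum>k<m. R ^ CARD('n) * (\<bar>d k\<bar> powr q * Pq TYPE('n) q k))"
    by (simp add: Pq_def abs_mult powr_mult)
  finally have I: "(\<integral>x. \<bar>CF m d R (x \<bullet> x)\<bar> powr q \<partial>(lborel::(real^'n) measure)) = (\<Sum>k<m. R ^ CARD('n) * (\<bar>d k\<bar> powr q * Pq TYPE('n) q k))" .
  have "(\<integral>x. \<bar>CF m d R (x \<bullet> x)\<bar> powr q \<partial>(lborel::(real^'n) measure)) \<ge> 0"
    by (rule Bochner_Integration.integral_nonneg) simp
  then show ?thesis unfolding Lpn_def powr_powr using q I by (simp add: powr_one)
qed

lemma int_pos:
  fixes \<phi> :: "real^'n::finite \<Rightarrow> real"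
  assumes c: "continuous_on UNIV \<phi>" and nn: "\<And>x. \<phi> x \<ge> 0" and i: "integrable lborel \<phi>" and p: "\<phi> x0 > 0"
  shows "(\<integral>x. \<phi> x \<partial>lborel) > 0"
proof (rule ccontr)
  assume "\<not> (\<integral>x. \<phi> x \<partial>lborel) > 0"
  moreover have "(\<integral>x. \<phi> x \<partial>lborel) \<ge> 0" using nn by simp
  ultimately have "(\<integral>x. \<phi> x \<partial>lborel) = 0" by simp
  then have "AE x in lborel. \<phi> x = 0" using integral_nonneg_eq_0_iff_AE[OF i] nn by simp
  then have "AE x in lebesgue. \<phi> x = 0" by (rule AE_completion)
  then have "AE x in lebesgue. x \<in> {x. \<phi> x = 0}" by simp
  moreover have "closed {x. \<phi> x = 0}"
    using continuous_closed_preimage_constant[OF c closed_UNIV, of 0] by simp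
  ultimately have "x0 \<in> {x. \<phi> x = 0}" using mem_closed_if_AE_lebesgue by blast
  then show False using p by simp
qed

lemma pt_exists: "\<exists>x::real^'n::finite. x \<bullet> x = aa k + 1/2"
proof -
  define s where "s = sqrt (aa k + 1/2)"
  have "s * s = aa k + 1/2" unfolding s_def by (simp add: aa_def)
  then show ?thesis
    by (intro exI[of _ "s *\<^sub>R axis undefined 1"]) (simp add: inner_axis)
qed

lemma ell_pos: "ell TYPE('n::finite) k > 0"
proof -
  obtain x0 :: "real^'n" where x0: "x0 \<bullet> x0 = aa k + 1/2" using pt_exists by blast
  have c: "continuous_on UNIV (\<lambda>x::real^'n. (BF k (x \<bullet> x))\<^sup>2)"
    by (intro continuous_intros cont_sq BF_cont)
  show ?thesis unfolding ell_def
  proof (rule int_pos[OF c _ _, of x0])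
    show "integrable lborel (\<lambda>x::real^'n. (BF k (x \<bullet> x))\<^sup>2)"
      by (rule int_radial[where T="bb k"]) (auto intro!: continuous_intros BF_cont simp: BF_supp)
    show "(BF k (x0 \<bullet> x0))\<^sup>2 > 0" using BF_pos[of k] x0 by simp
  qed simp
qed

lemma Pq_pos: assumes q: "q > 0" shows "Pq TYPE('n::finite) q k > 0"
proof -
  obtain x0 :: "real^'n" where x0: "x0 \<bullet> x0 = aa k + 1/2" using pt_exists by blast
  have hc: "continuous_on UNIV (\<lambda>y::real. \<bar>y\<bar> powr q)"
    by (rule continuous_on_powr') (use q in \<open>auto intro!: continuous_intros\<close>)
  have c: "continuous_on UNIV (\<lambda>x::real^'n. \<bar>BF k (x \<bullet> x)\<bar> powr q)"
    by (rule continuous_on_compose2[OF hc]) (auto intro!: cont_sq BF_cont)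
  show ?thesis unfolding Pq_def
  proof (rule int_pos[OF c _ _, of x0])
    show "integrable lborel (\<lambda>x::real^'n. \<bar>BF k (x \<bullet> x)\<bar> powr q)"
      by (rule int_radial[where T="bb k"]) (auto intro!: continuous_on_compose2[OF hc] BF_cont simp: BF_supp)
    show "\<bar>BF k (x0 \<bullet> x0)\<bar> powr q > 0" using BF_pos[of k] x0 by simp
  qed simp
qed

lemma lam_nonneg: "lam TYPE('n::finite) k \<ge> 0"
  unfolding lam_def by (rule Bochner_Integration.integral_nonneg) simp

lemma gam'_nonneg: "gam' TYPE('n::finite) k \<ge> 0"
  unfolding gam'_def by (rule Bochner_Integration.integral_nonneg) simp

lemma Pq_nonneg: "Pq TYPE('n::finite) q k \<ge> 0"
  unfolding Pq_def by (rule Bochner_Integration.integral_nonneg) simp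

lemma rstar_pos:
  assumes N: "CARD('n::finite) \<ge> 5" and mu: "\<mu> > 0" and p: "2 < p" "p < 2 + 4 / real CARD('n)"
    and c: "0 < c" "c < c_star TYPE('n) \<mu> p"
  shows "r_star TYPE('n) \<mu> p > 0"
proof -
  define s where "s = crit_exp TYPE('n)"
  define g where "g = gam TYPE('n) p"
  define C where "C = GN_const TYPE('n) p"
  define S where "S = Sob_const TYPE('n)"
  define n where "n = real CARD('n)"
  have n5: "n \<ge> 5" using N by (simp add: n_def)
  have s_eq: "s = 2 * n / (n - 4)" by (simp add: s_def crit_exp_def n_def)
  have s2: "s - 2 > 0"
  proof -
    have "s - 2 = 8 / (n - 4)" using n5 by (simp add: s_eq field_simps)
    then show ?thesis using n5 by simp
  qed
  have sp: "s > 0" using s2 by simp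
  have pg: "p * g = n * (p - 2) / 4" using p by (simp add: g_def gam_def n_def field_simps)
  have pg1: "p * g < 1"
  proof -
    have "p - 2 < 4 / n" using p by (simp add: n_def)
    then have "n * (p - 2) < 4" using n5 by (simp add: field_simps)
    then show ?thesis by (simp add: pg)
  qed
  have cs: "c_star TYPE('n) \<mu> p > 0" using c by simp
  have E0: "calE TYPE('n) \<mu> p \<noteq> 0"
  proof
    assume "calE TYPE('n) \<mu> p = 0"
    then have "c_star TYPE('n) \<mu> p = 0" by (simp add: c_star_def Let_def)
    then show False using cs by simp
  qed
  have C0: "C \<noteq> 0"
  proof
    assume "C = 0"
    then have "calE TYPE('n) \<mu> p = 0" using p by (simp add: calE_def Let_def C_def)
    then show False using E0 by simp
  qed
  have S0: "S \<noteq> 0"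
  proof
    assume "S = 0"
    then have "calE TYPE('n) \<mu> p = 0" using sp by (simp add: calE_def Let_def S_def s_def)
    then show False using E0 by simp
  qed
  have base: "(2 - p * g) * \<mu> * s * S powr (s / 2) * C powr p * c_star TYPE('n) \<mu> p powr (p * (1 - g) / 2) / ((s - 2) * p) \<noteq> 0"
    using pg1 mu sp S0 C0 cs s2 p by simp
  then show ?thesis
    unfolding r_star_def r_c_def Let_def s_def[symmetric] g_def[symmetric] C_def[symmetric] S_def[symmetric]
    by (simp add: powr_def)
qed

lemma compact_fbox: "compact (Pi\<^sub>E UNIV (\<lambda>k::nat. if k < m then {-1..1} else {0::real}))"
proof -
  have "compactin (product_topology (\<lambda>_. euclidean) UNIV) (Pi\<^sub>E UNIV (\<lambda>k::nat. if k < m then {-1..1} else {0::real}))"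
    by (subst compactin_PiE) auto
  then show ?thesis by (simp add: euclidean_product_topology)
qed

lemma sphere_max:
  fixes m :: nat and \<Phi> :: "(nat \<Rightarrow> real) \<Rightarrow> real"
  assumes m: "m \<ge> 1" and c: "continuous_on UNIV \<Phi>"
  shows "\<exists>s0. (\<Sum>k<m. (s0 k)\<^sup>2) = 1 \<and> (\<forall>k\<ge>m. s0 k = 0) \<and>
     (\<forall>s. (\<Sum>k<m. (s k)\<^sup>2) = 1 \<and> (\<forall>k\<ge>m. s k = 0) \<longrightarrow> \<Phi> s \<le> \<Phi> s0)"
proof -
  define Kset where "Kset = {s::nat \<Rightarrow> real. (\<Sum>k<m. (s k)\<^sup>2) = 1 \<and> (\<forall>k\<ge>m. s k = 0)}"
  have sub: "Kset \<subseteq> Pi\<^sub>E UNIV (\<lambda>k::nat. if k < m then {-1..1} else {0::real})"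
  proof
    fix s assume s: "s \<in> Kset"
    have "\<bar>s k\<bar> \<le> 1" if "k < m" for k
    proof -
      have "(s k)\<^sup>2 \<le> (\<Sum>k<m. (s k)\<^sup>2)"
        by (rule member_le_sum) (use that in auto)
      then have "(s k)\<^sup>2 \<le> 1\<^sup>2" using s by (simp add: Kset_def)
      then show ?thesis using abs_le_square_iff[of "s k" 1] by simp
    qed
    then show "s \<in> Pi\<^sub>E UNIV (\<lambda>k::nat. if k < m then {-1..1} else {0::real})"
      using s by (auto simp: Kset_def PiE_def Pi_def abs_le_iff)
  qed
  have "continuous_on UNIV (\<lambda>s::nat\<Rightarrow>real. \<Sum>k<m. (s k)\<^sup>2)"
    by (intro continuous_on_sum continuous_on_power continuous_on_product_coordinates)
  then have cl1: "closed {s::nat \<Rightarrow> real. (\<Sum>k<m. (s k)\<^sup>2) = 1}"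
    using continuous_closed_preimage_constant[of UNIV "\<lambda>s::nat\<Rightarrow>real. \<Sum>k<m. (s k)\<^sup>2" 1]
    by auto
  have cl2: "closed {s::nat \<Rightarrow> real. s k = 0}" for k
    using continuous_closed_preimage_constant[of UNIV "\<lambda>s::nat\<Rightarrow>real. s k" 0] by auto
  have "Kset = {s. (\<Sum>k<m. (s k)\<^sup>2) = 1} \<inter> (\<Inter>k\<in>{m..}. {s. s k = 0})"
    by (auto simp: Kset_def)
  then have "closed Kset" using cl1 cl2 by (auto intro!: closed_Int closed_INT)
  then have comp: "compact Kset"
    using compact_Int_closed[OF compact_fbox[of m] \<open>closed Kset\<close>] sub by (simp add: Int_absorb1)
  have ne: "Kset \<noteq> {}"
  proof -
    have "(\<Sum>k<m. (if k = 0 then 1 else 0::real)\<^sup>2) = (\<Sum>k<m. if k = 0 then 1 else 0::real)"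
      by (rule sum.cong) auto
    also have "\<dots> = 1" using m by (simp add: sum.delta)
    finally have "(\<lambda>k. if k = 0 then 1 else 0::real) \<in> Kset"
      using m by (auto simp: Kset_def)
    then show ?thesis by blast
  qed
  obtain s0 where "s0 \<in> Kset" "\<forall>s\<in>Kset. \<Phi> s \<le> \<Phi> s0"
    using continuous_attains_sup[OF comp ne continuous_on_subset[OF c]] by auto
  then show ?thesis by (auto simp: Kset_def)
qed


lemma sum_pow_lb:
  fixes s \<beta> :: "nat \<Rightarrow> real"
  assumes m: "m \<ge> 1" and s: "(\<Sum>k<m. (s k)\<^sup>2) = 1" and p: "p > 0" and b: "\<And>k. k < m \<Longrightarrow> \<beta> k > 0"
  shows "(\<Sum>k<m. \<bar>s k\<bar> powr p * \<beta> k) \<ge> (1 / real m) powr (p / 2) * Min (\<beta> ` {..<m})"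
proof -
  have "\<exists>j<m. (s j)\<^sup>2 \<ge> 1 / real m"
  proof (rule ccontr)
    assume "\<not> (\<exists>j<m. (s j)\<^sup>2 \<ge> 1 / real m)"
    then have lt: "(s k)\<^sup>2 < 1 / real m" if "k < m" for k using that by (meson not_le)
    have "(\<Sum>k<m. (s k)\<^sup>2) < (\<Sum>k<m. 1 / real m)"
      by (rule sum_strict_mono) (use m lt in \<open>auto simp: lessThan_empty_iff\<close>)
    also have "\<dots> = 1" using m by simp
    finally show False using s by simp
  qed
  then obtain j where j: "j < m" "(s j)\<^sup>2 \<ge> 1 / real m" by blast
  have e: "\<bar>s j\<bar> powr p = ((s j)\<^sup>2) powr (p / 2)"
  proof -
    have a: "(s j)\<^sup>2 = \<bar>s j\<bar> powr 2" by simp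
    have b: "(\<bar>s j\<bar> powr 2) powr (p / 2) = \<bar>s j\<bar> powr p" unfolding powr_powr by simp
    show ?thesis by (simp only: a b)
  qed
  have "(1 / real m) powr (p / 2) \<le> \<bar>s j\<bar> powr p"
    unfolding e by (rule powr_mono2) (use p j in auto)
  moreover have "Min (\<beta> ` {..<m}) \<le> \<beta> j" using j by (intro Min_le) auto
  moreover have "Min (\<beta> ` {..<m}) > 0" using b m by (subst Min_gr_iff) (auto simp: lessThan_empty_iff)
  ultimately have "(1 / real m) powr (p / 2) * Min (\<beta> ` {..<m}) \<le> \<bar>s j\<bar> powr p * \<beta> j"
    by (intro mult_mono) auto
  also have "\<dots> \<le> (\<Sum>k<m. \<bar>s k\<bar> powr p * \<beta> k)"
  proof (rule member_le_sum)
    fix x assume "x \<in> {..<m} - {j}"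
    then have "\<beta> x > 0" using b by auto
    then show "0 \<le> \<bar>s x\<bar> powr p * \<beta> x" by simp
  qed (use j in auto)
  finally show ?thesis .
qed

theorem lemma4p1:
  fixes \<mu> p c :: real and m :: nat
  assumes "CARD('n::finite) \<ge> 5" and "\<mu> > 0" and "2 < p" and "p < 2 + 4 / real CARD('n)"
    and "0 < c" and "c < c_star TYPE('n) \<mu> p" and "m \<ge> 1"
  shows "\<exists>u :: nat \<Rightarrow> (real^'n \<Rightarrow> real).
     (\<forall>i<m. u i \<in> V_r \<mu> p c) \<and>
     (\<forall>i<m. \<forall>j<m. i \<noteq> j \<longrightarrow> (\<integral>x. u i x * u j x \<partial>lborel) = 0) \<and>
     (\<forall>s::nat \<Rightarrow> real. (AE x in lborel. (\<Sum>i<m. s i * u i x) = 0) \<longrightarrow> (\<forall>i<m. s i = 0)) \<and>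
     (\<forall>s::nat \<Rightarrow> real. H2r (\<lambda>x. \<Sum>i<m. s i * u i x)) \<and>
     {(\<lambda>x. \<Sum>i<m. s i * u i x) | s. (\<Sum>i<m. (s i)\<^sup>2) = 1} \<subseteq> V_r \<mu> p c \<and>
     (\<exists>\<mu>m > 0. \<forall>\<mu>' \<ge> \<mu>m.
        \<exists>u0 \<in> {(\<lambda>x. \<Sum>i<m. s i * u i x) | s. (\<Sum>i<m. (s i)\<^sup>2) = 1}.
          (\<forall>v \<in> {(\<lambda>x. \<Sum>i<m. s i * u i x) | s. (\<Sum>i<m. (s i)\<^sup>2) = 1}. Ifun \<mu>' p v \<le> Ifun \<mu>' p u0)
          \<and> Ifun \<mu>' p u0 < 0)"
proof -
  note asm = assms
  define N where "N = CARD('n)"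
  define r where "r = r_star TYPE('n) \<mu> p"
  have r: "r > 0" unfolding r_def by (rule rstar_pos) (use assms in auto)
  define W where "W k = c / ell TYPE('n) k" for k
  have W: "W k > 0" for k using assms ell_pos[of k, where 'n='n] by (simp add: W_def)
  have Wl: "W k * ell TYPE('n) k = c" for k using ell_pos[of k, where 'n='n] by (simp add: W_def)
  define A' where "A' k R4 R2 = W k * lam TYPE('n) k / R4 + W k * gam' TYPE('n) k / R2" for k and R4 R2 :: real
  define A where "A k = W k * lam TYPE('n) k + W k * gam' TYPE('n) k" for k
  have A0: "A k \<ge> 0" for k using W[of k] lam_nonneg[of k, where 'n='n] gam'_nonneg[of k, where 'n='n]
    by (simp add: A_def)
  define K where "K = (\<Sum>k<m. A k)"
  have K0: "K \<ge> 0" unfolding K_def by (rule sum_nonneg) (use A0 in auto)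
  define R where "R = K / r\<^sup>2 + 1"
  have R1: "R \<ge> 1" using K0 r by (simp add: R_def)
  then have R0: "R > 0" by simp
  define \<alpha> where "\<alpha> k = sqrt (W k / R ^ N)" for k
  have \<alpha>0: "\<alpha> k > 0" for k using W[of k] R0 by (simp add: \<alpha>_def)
  have \<alpha>sq: "R ^ N * (\<alpha> k)\<^sup>2 = W k" for k
    using W[of k] R0 by (simp add: \<alpha>_def)
  define u where "u i x = \<alpha> i * BF i ((x \<bullet> x) / R\<^sup>2)" for i and x :: "real^'n"
  define v where "v s = (\<lambda>x::real^'n. \<Sum>i<m. s i * u i x)" for s
  have vCF: "v s = (\<lambda>x. CF m (\<lambda>k. s k * \<alpha> k) R (x \<bullet> x))" for s
    unfolding v_def u_def CF_def by (simp add: mult.assoc)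
  have H2v: "H2r (v s)" for s
    unfolding vCF by (rule CF_facts(1)[OF R0])
  have L2v: "L2_sq (v s) = c * (\<Sum>k<m. (s k)\<^sup>2)" for s
  proof -
    have "L2_sq (v s) = (\<Sum>k<m. R ^ N * ((s k * \<alpha> k)\<^sup>2 * ell TYPE('n) k))"
      unfolding vCF N_def by (rule CF_facts(2)[OF R0])
    also have "\<dots> = (\<Sum>k<m. c * (s k)\<^sup>2)"
    proof (rule sum.cong[OF refl])
      fix k
      have "R ^ N * ((s k * \<alpha> k)\<^sup>2 * ell TYPE('n) k) = (s k)\<^sup>2 * ((R ^ N * (\<alpha> k)\<^sup>2) * ell TYPE('n) k)"
        by (simp add: power_mult_distrib mult_ac)
      also have "\<dots> = c * (s k)\<^sup>2" by (simp add: \<alpha>sq Wl)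
      finally show "R ^ N * ((s k * \<alpha> k)\<^sup>2 * ell TYPE('n) k) = c * (s k)\<^sup>2" .
    qed
    finally show ?thesis by (simp add: sum_distrib_left)
  qed
  have LGv: "lap_sq (v s) + grad_sq (v s) = (\<Sum>k<m. (s k)\<^sup>2 * A' k (R ^ 4) (R\<^sup>2))" for s
  proof -
    have "lap_sq (v s) + grad_sq (v s) = (\<Sum>k<m. R ^ N * ((s k * \<alpha> k)\<^sup>2 / R ^ 4 * lam TYPE('n) k))
         + (\<Sum>k<m. R ^ N * ((s k * \<alpha> k)\<^sup>2 / R\<^sup>2 * gam' TYPE('n) k))"
      unfolding vCF N_def by (simp add: CF_facts(3,4)[OF R0])
    also have "\<dots> = (\<Sum>k<m. (s k)\<^sup>2 * A' k (R ^ 4) (R\<^sup>2))"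
      unfolding sum.distrib[symmetric]
    proof (rule sum.cong[OF refl])
      fix k
      have "R ^ N * ((s k * \<alpha> k)\<^sup>2 / R ^ 4 * lam TYPE('n) k) + R ^ N * ((s k * \<alpha> k)\<^sup>2 / R\<^sup>2 * gam' TYPE('n) k)
          = (s k)\<^sup>2 * ((R ^ N * (\<alpha> k)\<^sup>2) * lam TYPE('n) k / R ^ 4 + (R ^ N * (\<alpha> k)\<^sup>2) * gam' TYPE('n) k / R\<^sup>2)"
        by (simp add: power_mult_distrib field_simps)
      then show "R ^ N * ((s k * \<alpha> k)\<^sup>2 / R ^ 4 * lam TYPE('n) k) + R ^ N * ((s k * \<alpha> k)\<^sup>2 / R\<^sup>2 * gam' TYPE('n) k)
          = (s k)\<^sup>2 * A' k (R ^ 4) (R\<^sup>2)" by (simp add: \<alpha>sq A'_def)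
    qed
    finally show ?thesis .
  qed
  have LGb: "lap_sq (v s) + grad_sq (v s) < r\<^sup>2" if s: "(\<Sum>k<m. (s k)\<^sup>2) = 1" for s
  proof -
    have t: "(s k)\<^sup>2 * A' k (R ^ 4) (R\<^sup>2) \<le> A k / R" if "k < m" for k
    proof -
      have sk: "(s k)\<^sup>2 \<le> 1"
      proof -
        have "(s k)\<^sup>2 \<le> (\<Sum>k<m. (s k)\<^sup>2)" by (rule member_le_sum) (use that in auto)
        then show ?thesis using s by simp
      qed
      have R42: "R\<^sup>2 \<le> R ^ 4" using R1 by (simp add: power_increasing)
      have R2: "R \<le> R\<^sup>2" using R1 by (simp add: power2_eq_square)
      have l0: "lam TYPE('n) k \<ge> 0" "gam' TYPE('n) k \<ge> 0" by (rule lam_nonneg, rule gam'_nonneg)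
      have "W k * lam TYPE('n) k / R ^ 4 \<le> W k * lam TYPE('n) k / R"
        using R42 R2 R0 W[of k] l0 by (intro divide_left_mono mult_nonneg_nonneg) auto
      moreover have "W k * gam' TYPE('n) k / R\<^sup>2 \<le> W k * gam' TYPE('n) k / R"
        using R2 R0 W[of k] l0 by (intro divide_left_mono mult_nonneg_nonneg) auto
      ultimately have a: "A' k (R ^ 4) (R\<^sup>2) \<le> A k / R" by (simp add: A'_def A_def add_divide_distrib)
      have a0: "A' k (R ^ 4) (R\<^sup>2) \<ge> 0" using W[of k] l0 R0 by (simp add: A'_def)
      have "(s k)\<^sup>2 * A' k (R ^ 4) (R\<^sup>2) \<le> 1 * A' k (R ^ 4) (R\<^sup>2)"
        using sk a0 by (intro mult_right_mono) auto
      then show ?thesis using a by simp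
    qed
    have "lap_sq (v s) + grad_sq (v s) \<le> (\<Sum>k<m. A k / R)"
      unfolding LGv by (rule sum_mono) (use t in auto)
    also have "\<dots> = K / R" by (simp add: K_def sum_divide_distrib)
    also have "\<dots> < r\<^sup>2"
    proof -
      have "K < r\<^sup>2 * R" using r by (simp add: R_def field_simps)
      then show ?thesis using R0 by (simp add: divide_less_eq mult.commute)
    qed
    finally show ?thesis .
  qed
  have inV: "v s \<in> V_r \<mu> p c" if s: "(\<Sum>k<m. (s k)\<^sup>2) = 1" for s
    unfolding V_r_def S_r_def using H2v[of s] L2v[of s] LGb[OF s] s by (simp add: r_def)
  have vv: "(\<lambda>x. \<Sum>i<m. s i * u i x) = v s" for s by (simp add: v_def)
  have ui: "u i = v (\<lambda>k. if k = i then 1 else 0)" if "i < m" for i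
    unfolding v_def using that by (simp add: if_distrib[of "\<lambda>y. y * _"] cong: if_cong)
  have e1: "(\<Sum>k<m. (if k = i then 1 else 0 :: real)\<^sup>2) = 1" if "i < m" for i
  proof -
    have "(\<Sum>k<m. (if k = i then 1 else 0 :: real)\<^sup>2) = (\<Sum>k<m. if k = i then 1 else 0 :: real)"
      by (rule sum.cong) auto
    also have "\<dots> = 1" using that by (simp add: sum.delta)
    finally show ?thesis .
  qed
  define q' where "q' = crit_exp TYPE('n)"
  have q'0: "q' > 0" using assms(1) by (simp add: q'_def crit_exp_def)
  have p0: "p > 0" using assms by simp
  define \<beta> where "\<beta> k = R ^ N * (\<alpha> k powr p * Pq TYPE('n) p k)" for k
  define \<beta>' where "\<beta>' k = R ^ N * (\<alpha> k powr q' * Pq TYPE('n) q' k)" for k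
  have \<beta>0: "\<beta> k > 0" for k unfolding \<beta>_def using R0 \<alpha>0[of k] Pq_pos[OF p0, of k, where 'n='n] by simp
  have \<beta>'0: "\<beta>' k \<ge> 0" for k unfolding \<beta>'_def using R0 \<alpha>0[of k] Pq_nonneg[of q' k, where 'n='n] by simp
  have Lq: "Lpn e (v s) powr e = (\<Sum>k<m. \<bar>s k\<bar> powr e * (R ^ N * (\<alpha> k powr e * Pq TYPE('n) e k)))" if e: "e > 0" for e s
  proof -
    have "Lpn e (v s) powr e = (\<Sum>k<m. R ^ N * (\<bar>s k * \<alpha> k\<bar> powr e * Pq TYPE('n) e k))"
      unfolding vCF N_def by (rule CF_Lpn[OF R0 e])
    also have "\<dots> = (\<Sum>k<m. \<bar>s k\<bar> powr e * (R ^ N * (\<alpha> k powr e * Pq TYPE('n) e k)))"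
      using \<alpha>0 by (intro sum.cong) (auto simp: abs_mult powr_mult abs_of_pos[OF \<alpha>0])
    finally show ?thesis .
  qed
  define \<Phi> where "\<Phi> \<mu>' s = 1/2 * (\<Sum>k<m. (s k)\<^sup>2 * A' k (R ^ 4) (R\<^sup>2)) - \<mu>' / p * (\<Sum>k<m. \<bar>s k\<bar> powr p * \<beta> k)
      - 1 / q' * (\<Sum>k<m. \<bar>s k\<bar> powr q' * \<beta>' k)" for \<mu>' s
  have I\<Phi>: "Ifun \<mu>' p (v s) = \<Phi> \<mu>' s" for \<mu>' s
  proof -
    have "Ifun \<mu>' p (v s) = 1/2 * (lap_sq (v s) + grad_sq (v s)) - \<mu>' / p * Lpn p (v s) powr p
        - 1 / q' * Lpn q' (v s) powr q'"
      by (simp add: Ifun_def q'_def algebra_simps)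
    then show ?thesis unfolding \<Phi>_def LGv Lq[OF p0] Lq[OF q'0] \<beta>_def \<beta>'_def by simp
  qed
  have cpow: "continuous_on UNIV (\<lambda>s::nat\<Rightarrow>real. \<bar>s k\<bar> powr e)" if "e > 0" for k e
    by (rule continuous_on_powr') (use that in \<open>auto intro!: continuous_intros continuous_on_product_coordinates\<close>)
  have c\<Phi>: "continuous_on UNIV (\<Phi> \<mu>')" for \<mu>'
    unfolding \<Phi>_def[abs_def]
    by (intro continuous_on_diff continuous_on_mult continuous_on_const continuous_on_sum
        continuous_on_power continuous_on_product_coordinates cpow p0 q'0)
  define B where "B = (1 / real m) powr (p / 2) * Min (\<beta> ` {..<m})"
  have B0: "B > 0"
  proof -
    have "Min (\<beta> ` {..<m}) > 0" using \<beta>0 assms(7) by (subst Min_gr_iff) (auto simp: lessThan_empty_iff)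
    then show ?thesis using assms(7) by (simp add: B_def)
  qed
  define \<mu>m where "\<mu>m = p * (r\<^sup>2 / 2 + 1) / B"
  have \<mu>m0: "\<mu>m > 0"
  proof -
    have "r\<^sup>2 / 2 + 1 > 0" by (simp add: add_nonneg_pos)
    then show ?thesis using B0 p0 unfolding \<mu>m_def by (intro divide_pos_pos mult_pos_pos)
  qed
  have part2: "\<forall>\<mu>' \<ge> \<mu>m. \<exists>u0 \<in> {v s | s. (\<Sum>i<m. (s i)\<^sup>2) = 1}.
          (\<forall>w \<in> {v s | s. (\<Sum>i<m. (s i)\<^sup>2) = 1}. Ifun \<mu>' p w \<le> Ifun \<mu>' p u0) \<and> Ifun \<mu>' p u0 < 0"
  proof (intro allI impI)
    fix \<mu>' assume \<mu>': "\<mu>' \<ge> \<mu>m"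
    obtain s0 where s0: "(\<Sum>k<m. (s0 k)\<^sup>2) = 1" "\<forall>k\<ge>m. s0 k = 0"
      "\<And>s. (\<Sum>k<m. (s k)\<^sup>2) = 1 \<and> (\<forall>k\<ge>m. s k = 0) \<Longrightarrow> \<Phi> \<mu>' s \<le> \<Phi> \<mu>' s0"
      using sphere_max[OF assms(7) c\<Phi>[of \<mu>']] by blast
    have max: "Ifun \<mu>' p w \<le> Ifun \<mu>' p (v s0)" if "w \<in> {v s | s. (\<Sum>i<m. (s i)\<^sup>2) = 1}" for w
    proof -
      from that obtain s where w: "w = v s" and s: "(\<Sum>i<m. (s i)\<^sup>2) = 1" by blast
      define s' where "s' k = (if k < m then s k else 0)" for k
      have "v s = v s'" unfolding v_def s'_def by (intro ext sum.cong) auto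
      moreover have "(\<Sum>k<m. (s' k)\<^sup>2) = 1" using s unfolding s'_def by simp
      moreover have "\<forall>k\<ge>m. s' k = 0" by (simp add: s'_def)
      ultimately show ?thesis using s0(3)[of s'] w by (simp add: I\<Phi>)
    qed
    have neg: "Ifun \<mu>' p (v s0) < 0"
    proof -
      have lg: "(\<Sum>k<m. (s0 k)\<^sup>2 * A' k (R ^ 4) (R\<^sup>2)) < r\<^sup>2" using LGb[OF s0(1)] LGv by simp
      have lb: "(\<Sum>k<m. \<bar>s0 k\<bar> powr p * \<beta> k) \<ge> B"
        unfolding B_def by (rule sum_pow_lb[OF assms(7) s0(1) p0 \<beta>0])
      have c0: "(\<Sum>k<m. \<bar>s0 k\<bar> powr q' * \<beta>' k) \<ge> 0" using \<beta>'0 by (intro sum_nonneg) simp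
      have "\<mu>' / p * (\<Sum>k<m. \<bar>s0 k\<bar> powr p * \<beta> k) \<ge> \<mu>m / p * B"
        using \<mu>' lb B0 p0 \<mu>m0 by (intro mult_mono divide_right_mono) auto
      also have "\<mu>m / p * B = r\<^sup>2 / 2 + 1" using p0 B0 by (simp add: \<mu>m_def)
      finally have "\<mu>' / p * (\<Sum>k<m. \<bar>s0 k\<bar> powr p * \<beta> k) \<ge> r\<^sup>2 / 2 + 1" .
      moreover have "1 / q' * (\<Sum>k<m. \<bar>s0 k\<bar> powr q' * \<beta>' k) \<ge> 0" using c0 q'0 by simp
      ultimately show ?thesis using lg unfolding I\<Phi> \<Phi>_def by linarith
    qed
    show "\<exists>u0 \<in> {v s | s. (\<Sum>i<m. (s i)\<^sup>2) = 1}.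
          (\<forall>w \<in> {v s | s. (\<Sum>i<m. (s i)\<^sup>2) = 1}. Ifun \<mu>' p w \<le> Ifun \<mu>' p u0) \<and> Ifun \<mu>' p u0 < 0"
      using max neg s0(1) by blast
  qed
  show ?thesis
  proof (intro exI[of _ u] conjI)
    show "\<forall>i<m. u i \<in> V_r \<mu> p c" using ui inV e1 by simp
    show "\<forall>i<m. \<forall>j<m. i \<noteq> j \<longrightarrow> (\<integral>x. u i x * u j x \<partial>lborel) = 0"
    proof (intro allI impI)
      fix i j assume ij: "i < m" "j < m" "i \<noteq> j"
      have "u i x * u j x = 0" for x
      proof (rule ccontr)
        assume "u i x * u j x \<noteq> 0"
        then have "BF i ((x \<bullet> x) / R\<^sup>2) \<noteq> 0" "BF j ((x \<bullet> x) / R\<^sup>2) \<noteq> 0" by (auto simp: u_def)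
        then show False using BF_supp(1) aabb_disj ij(3) by metis
      qed
      then have z: "(\<lambda>x. u i x * u j x) = (\<lambda>x. 0)" by (rule ext)
      show "(\<integral>x. u i x * u j x \<partial>lborel) = 0" unfolding z by simp
    qed
    show "\<forall>s. (AE x in lborel. (\<Sum>i<m. s i * u i x) = 0) \<longrightarrow> (\<forall>i<m. s i = 0)"
    proof (rule allI, rule impI)
      fix s assume ae: "AE x in lborel. (\<Sum>i<m. s i * u i x) = 0"
      have mv: "v s \<in> borel_measurable lborel" using H2v[of s] by (simp add: H2r_def H2_def L2_def)
      have "L2_sq (v s) = (\<integral>x. 0 \<partial>(lborel::(real^'n) measure))"
        unfolding L2_sq_def by (rule integral_cong_AE) (use ae mv in \<open>auto simp: v_def\<close>)
      then have "c * (\<Sum>k<m. (s k)\<^sup>2) = 0" using L2v by simp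
      then have "(\<Sum>k<m. (s k)\<^sup>2) = 0" using assms(5) by simp
      then have "\<forall>k\<in>{..<m}. (s k)\<^sup>2 = 0" by (subst sum_nonneg_eq_0_iff[symmetric]) auto
      then show "\<forall>i<m. s i = 0" by simp
    qed
    show "\<forall>s. H2r (\<lambda>x. \<Sum>i<m. s i * u i x)" using H2v by (simp add: vv)
    show "{(\<lambda>x. \<Sum>i<m. s i * u i x) | s. (\<Sum>i<m. (s i)\<^sup>2) = 1} \<subseteq> V_r \<mu> p c"
      using inV by (auto simp: vv)
    show "\<exists>\<mu>m > 0. \<forall>\<mu>' \<ge> \<mu>m.
        \<exists>u0 \<in> {(\<lambda>x. \<Sum>i<m. s i * u i x) | s. (\<Sum>i<m. (s i)\<^sup>2) = 1}.
          (\<forall>v \<in> {(\<lambda>x. \<Sum>i<m. s i * u i x) | s. (\<Sum>i<m. (s i)\<^sup>2) = 1}. Ifun \<mu>' p v \<le> Ifun \<mu>' p u0)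
          \<and> Ifun \<mu>' p u0 < 0"
      unfolding vv using part2 \<mu>m0 by blast
  qed
qed

end
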